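(* Assume (H1)–(H4) as described in the context. Let $\Sigma=\{(x,\varphi(x)):x\in V_1^{c,d}\}$, $\mu(E)=\int_{V_1^{c,d}}\chi_E(x,\varphi(x))\,dx$, and $\mathcal{R}f=\widehat f|_\Sigma$. Let $1\le p,q\le\infty$ and $\frac1{p'}=1-\frac1p$. If there exists a constant $C>0$ such that $\|\mathcal{R}f\|_{L^q(\Sigma,d\mu)}\le C\|f\|_{L^p(\mathbb{R}^4)}$ for all $f\in\mathcal{S}(\mathbb{R}^4)$, then $\frac1q\ge\frac{\alpha_1+\alpha_2+2m}{\alpha_1+\alpha_2}\cdot\frac1{p'}$.
   Context: Fix $\alpha_1,\alpha_2>0$ with $\alpha_1\neq\alpha_2$. For $t>0$ and $x=(x_1,x_2)\in\mathbb{R}^2$ put $t\bullet x=(t^{\alpha_1}x_1,t^{\alpha_2}x_2)$. For reals $a<b$ let $V^{a,b}=\{t\bullet(1,s): a<s<b,\ t>0\}$, and for $a<c<d<b$ let $V^{c,d}=\{t\bullet(1,s):c<s<d,\ t>0\}$ and $V_1^{c,d}=\{t\bullet(1,s): c<s<d,\ 0<t<1\}$. Let $\varphi=(\varphi_1,\varphi_2):V^{a,b}\to\mathbb{R}^2$. For $x\in V^{a,b}$ let $\varphi_j''(x)$ be the Hessian of $\varphi_j$ at $x$ and $Q_x(\zeta)=\det(\zeta_1\varphi_1''(x)+\zeta_2\varphi_2''(x))$. A point $x$ is elliptic for $\varphi$ if $\min_{\zeta\in S^1}|Q_x(\zeta)|>0$. Assumptions: (H1) $\varphi$ is real analytic on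 $V^{a,b}$. (H2) For some $m\ge 3(\alpha_1+\alpha_2)$, $\varphi(t\bullet x)=t^m\varphi(x)$ for all $x\in V^{a,b}$, $t>0$. (H3) $a<c<d<b$ and $\sigma\in[c,d]$ are such that the set of nonelliptic points of $\varphi$ in $\overline{V^{c,d}}\setminus\{\mathbf 0\}$ is exactly $\{t\bullet(1,\sigma):t>0\}$. (H4) With $\beta=2(m-\alpha_1-\alpha_2)$, there are positive integers $n_1,n_2$ and constants $D,\delta>0$ such that: if $\sigma\in(c,d]$ then $\min_{\zeta\in S^1}|Q_{t\bullet(1,s)}(\zeta)|\ge D t^\beta|s-\sigma|^{n_1}$ for $s\in(\sigma-\delta,\sigma)$, $t>0$; if $\sigma\in[c,d)$ then the same holds with $n_2$ for $s\in(\sigma,\sigma+\delta)$, $t>0$; and $\max\{n_1,n_2\}<\frac{2m}{\alpha_1+\alpha_2}-3$. $L^q(\Sigma,d\mu)$ has norm $\|g\|_q^q=\int_{V_1^{c,d}}|g(x,\varphi(x))|^q dx$. *)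

theory Defs
  imports "HOL-Analysis.Analysis"
begin

text \<open>Points of R^2 are pairs of reals; points of R^4 = R^2 x R^2 are pairs of such pairs
 (Euclidean norm, standard inner product and Lebesgue measure lborel).\<close>

definition dil :: "real \<Rightarrow> real \<Rightarrow> real \<Rightarrow> real \<times> real \<Rightarrow> real \<times> real" where
  "dil a1 a2 t x = (t powr a1 * fst x, t powr a2 * snd x)"

definition Vset :: "real \<Rightarrow> real \<Rightarrow> real \<Rightarrow> real \<Rightarrow> (real \<times> real) set" where
  "Vset a1 a2 a b = {dil a1 a2 t (1, s) | t s. 0 < t \<and> a < s \<and> s < b}"

definition V1set :: "real \<Rightarrow> real \<Rightarrow> real \<Rightarrow> real \<Rightarrow> (real \<times> real) set" where
  "V1set a1 a2 c d = {dil a1 a2 t (1, s) | t s. 0 < t \<and> t < 1 \<and> c < s \<and> s < d}"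

text \<open>Real analyticity on a set: locally a (absolutely) convergent double power series.\<close>
definition real_analytic_on2 :: "(real \<times> real \<Rightarrow> real) \<Rightarrow> (real \<times> real) set \<Rightarrow> bool" where
  "real_analytic_on2 f S \<longleftrightarrow>
     (\<forall>x0\<in>S. \<exists>r>0. \<exists>c :: nat \<Rightarrow> nat \<Rightarrow> real. \<forall>x\<in>ball x0 r \<inter> S.
        ((\<lambda>(i, j). c i j * (fst x - fst x0) ^ i * (snd x - snd x0) ^ j) has_sum f x) UNIV)"

definition pd1 :: "(real \<times> real \<Rightarrow> real) \<Rightarrow> real \<times> real \<Rightarrow> real" where
  "pd1 f x = deriv (\<lambda>u. f (u, snd x)) (fst x)"

definition pd2 :: "(real \<times> real \<Rightarrow> real) \<Rightarrow> real \<times> real \<Rightarrow> real" where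
  "pd2 f x = deriv (\<lambda>u. f (fst x, u)) (snd x)"

text \<open>Q_x(zeta) = det(zeta_1 phi_1''(x) + zeta_2 phi_2''(x)) for the 2x2 Hessians.\<close>
definition Qform :: "(real \<times> real \<Rightarrow> real \<times> real) \<Rightarrow> real \<times> real \<Rightarrow> real \<times> real \<Rightarrow> real" where
  "Qform \<phi> x \<zeta> =
     (let f1 = (\<lambda>y. fst (\<phi> y)); f2 = (\<lambda>y. snd (\<phi> y));
          A11 = fst \<zeta> * pd1 (pd1 f1) x + snd \<zeta> * pd1 (pd1 f2) x;
          A12 = fst \<zeta> * pd2 (pd1 f1) x + snd \<zeta> * pd2 (pd1 f2) x;
          A21 = fst \<zeta> * pd1 (pd2 f1) x + snd \<zeta> * pd1 (pd2 f2) x;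
          A22 = fst \<zeta> * pd2 (pd2 f1) x + snd \<zeta> * pd2 (pd2 f2) x
      in A11 * A22 - A12 * A21)"

definition minQ :: "(real \<times> real \<Rightarrow> real \<times> real) \<Rightarrow> real \<times> real \<Rightarrow> real" where
  "minQ \<phi> x = (INF \<zeta>\<in>sphere (0 :: real \<times> real) 1. \<bar>Qform \<phi> x \<zeta>\<bar>)"

definition elliptic :: "(real \<times> real \<Rightarrow> real \<times> real) \<Rightarrow> real \<times> real \<Rightarrow> bool" where
  "elliptic \<phi> x \<longleftrightarrow> minQ \<phi> x > 0"

type_synonym R4 = "(real \<times> real) \<times> (real \<times> real)"

fun iter_dd :: "(R4 \<Rightarrow> complex) \<Rightarrow> R4 list \<Rightarrow> R4 \<Rightarrow> complex" where
  "iter_dd f [] = f"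
| "iter_dd f (v # vs) = (\<lambda>x. frechet_derivative (iter_dd f vs) (at x) v)"

definition schwartz :: "(R4 \<Rightarrow> complex) \<Rightarrow> bool" where
  "schwartz f \<longleftrightarrow>
     (\<forall>vs. \<forall>x. iter_dd f vs differentiable (at x)) \<and>
     (\<forall>vs. \<forall>n::nat. \<exists>C. \<forall>x. norm x ^ n * norm (iter_dd f vs x) \<le> C)"

definition fourier :: "(R4 \<Rightarrow> complex) \<Rightarrow> R4 \<Rightarrow> complex" where
  "fourier f \<xi> = (LINT x|lborel. f x * cis (- 2 * pi * (x \<bullet> \<xi>)))"

text \<open>L^p norm, 1 <= p <= infinity (p = top means the essential supremum).\<close>
definition Lp_norm :: "'a measure \<Rightarrow> ennreal \<Rightarrow> ('a \<Rightarrow> complex) \<Rightarrow> ennreal" where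
  "Lp_norm M p g =
     (if p = top then (INF C\<in>{C::ennreal. AE x in M. ennreal (norm (g x)) \<le> C}. C)
      else (let I = (\<integral>\<^sup>+ x. ennreal (norm (g x) powr enn2real p) \<partial>M)
            in if I = top then top else ennreal (enn2real I powr (1 / enn2real p))))"

end

theory Submission
  imports Defs "HOL-Probability.Probability"
begin


inductive pf :: "(R4 \<Rightarrow> real) \<Rightarrow> bool" where
  pf_const: "pf (\<lambda>_. c)"
| pf_lin: "pf (\<lambda>z. z \<bullet> v)"
| pf_add: "pf f \<Longrightarrow> pf g \<Longrightarrow> pf (\<lambda>z. f z + g z)"
| pf_mult: "pf f \<Longrightarrow> pf g \<Longrightarrow> pf (\<lambda>z. f z * g z)"

lemma pf_deriv:
  assumes "pf f"
  shows "\<exists>f'. (\<forall>x. (f has_derivative f' x) (at x)) \<and> (\<forall>v. pf (\<lambda>x. f' x v))"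
  using assms
proof induction
  case (pf_const c)
  show ?case by (rule exI[of _ "\<lambda>x v. 0"]) (auto intro: pf.pf_const)
next
  case (pf_lin v)
  show ?case
    by (rule exI[of _ "\<lambda>x h. h \<bullet> v"])
       (auto intro: pf.pf_const has_derivative_inner_left[OF has_derivative_ident])
next
  case (pf_add f g)
  then obtain f' g' where f: "\<forall>x. (f has_derivative f' x) (at x)" "\<forall>v. pf (\<lambda>x. f' x v)"
    and g: "\<forall>x. (g has_derivative g' x) (at x)" "\<forall>v. pf (\<lambda>x. g' x v)" by blast
  show ?case
    by (rule exI[of _ "\<lambda>x h. f' x h + g' x h"])
       (use f g in \<open>auto intro: pf.pf_add has_derivative_add\<close>)
next
  case (pf_mult f g)
  then obtain f' g' where f: "\<forall>x. (f has_derivative f' x) (at x)" "\<forall>v. pf (\<lambda>x. f' x v)"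
    and g: "\<forall>x. (g has_derivative g' x) (at x)" "\<forall>v. pf (\<lambda>x. g' x v)" by blast
  show ?case
    by (rule exI[of _ "\<lambda>x h. f x * g' x h + f' x h * g x"])
       (use f g pf_mult.hyps in \<open>auto intro!: pf.pf_add pf.pf_mult has_derivative_mult\<close>)
qed

lemma pf_bound:
  assumes "pf f"
  shows "\<exists>C N. C \<ge> 0 \<and> (\<forall>z. \<bar>f z\<bar> \<le> C * (1 + norm z) ^ N)"
  using assms
proof induction
  case (pf_const c)
  show ?case by (rule exI[of _ "\<bar>c\<bar>"], rule exI[of _ 0]) auto
next
  case (pf_lin v)
  have "\<bar>z \<bullet> v\<bar> \<le> norm v * (1 + norm z) ^ 1" for z
  proof -
    have "\<bar>z \<bullet> v\<bar> \<le> norm z * norm v" by (rule Cauchy_Schwarz_ineq2)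
    also have "\<dots> \<le> norm v * (1 + norm z)" by (simp add: mult.commute mult_left_mono)
    finally show ?thesis by simp
  qed
  then show ?case by (intro exI[of _ "norm v"] exI[of _ 1]) auto
next
  case (pf_add f g)
  then obtain C1 N1 C2 N2 where 1: "C1 \<ge> 0" "\<forall>z. \<bar>f z\<bar> \<le> C1 * (1 + norm z) ^ N1"
    and 2: "C2 \<ge> 0" "\<forall>z. \<bar>g z\<bar> \<le> C2 * (1 + norm z) ^ N2" by blast
  have "\<bar>f z + g z\<bar> \<le> (C1 + C2) * (1 + norm z) ^ (N1 + N2)" for z
  proof -
    have a: "(1 + norm z) ^ N1 \<le> (1 + norm z) ^ (N1 + N2)"
      by (rule power_increasing) auto
    have b: "(1 + norm z) ^ N2 \<le> (1 + norm z) ^ (N1 + N2)"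
      by (rule power_increasing) auto
    have "\<bar>f z + g z\<bar> \<le> C1 * (1 + norm z) ^ N1 + C2 * (1 + norm z) ^ N2"
      using 1(2)[rule_format, of z] 2(2)[rule_format, of z] by (meson abs_triangle_ineq add_mono order_trans)
    also have "\<dots> \<le> C1 * (1 + norm z) ^ (N1 + N2) + C2 * (1 + norm z) ^ (N1 + N2)"
      using a b 1 2 by (intro add_mono mult_left_mono) auto
    finally show ?thesis by (simp add: algebra_simps)
  qed
  then show ?case using 1 2 by (intro exI[of _ "C1 + C2"] exI[of _ "N1 + N2"]) auto
next
  case (pf_mult f g)
  then obtain C1 N1 C2 N2 where 1: "C1 \<ge> 0" "\<forall>z. \<bar>f z\<bar> \<le> C1 * (1 + norm z) ^ N1"
    and 2: "C2 \<ge> 0" "\<forall>z. \<bar>g z\<bar> \<le> C2 * (1 + norm z) ^ N2" by blast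
  have "\<bar>f z * g z\<bar> \<le> (C1 * C2) * (1 + norm z) ^ (N1 + N2)" for z
  proof -
    have "\<bar>f z * g z\<bar> = \<bar>f z\<bar> * \<bar>g z\<bar>" by (simp add: abs_mult)
    also have "\<dots> \<le> (C1 * (1 + norm z) ^ N1) * (C2 * (1 + norm z) ^ N2)"
      using 1(1) 2(1) 1(2)[rule_format, of z] 2(2)[rule_format, of z] by (intro mult_mono) auto
    finally show ?thesis by (simp add: algebra_simps power_add)
  qed
  then show ?case using 1 2 by (intro exI[of _ "C1 * C2"] exI[of _ "N1 + N2"]) auto
qed

lemma pf_cmult: "pf f \<Longrightarrow> pf (\<lambda>z. c * f z)"
  by (rule pf_mult[OF pf_const])

lemma pf_diff: "pf f \<Longrightarrow> pf g \<Longrightarrow> pf (\<lambda>z. f z - g z)"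
  using pf_add[OF _ pf_cmult[of g "-1"], of f] by simp

definition HG :: "(R4 \<Rightarrow> real) \<Rightarrow> (R4 \<Rightarrow> complex) set" where
  "HG Q = {h. \<exists>p. pf p \<and> h = (\<lambda>z. complex_of_real (p z * exp (- Q z)))}"

lemma HG_deriv:
  assumes Q: "pf Q" and h: "h \<in> HG Q"
  shows "\<forall>x. h differentiable (at x)"
    and "(\<lambda>x. frechet_derivative h (at x) v) \<in> HG Q"
proof -
  obtain p where p: "pf p" and hp: "h = (\<lambda>z. complex_of_real (p z * exp (- Q z)))"
    using h unfolding HG_def by blast
  obtain p' where p': "\<forall>x. (p has_derivative p' x) (at x)" "\<forall>v. pf (\<lambda>x. p' x v)"
    using pf_deriv[OF p] by blast
  obtain Q' where Q': "\<forall>x. (Q has_derivative Q' x) (at x)" "\<forall>v. pf (\<lambda>x. Q' x v)"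
    using pf_deriv[OF Q] by blast
  define D where "D x = (\<lambda>v. complex_of_real (p x * (- Q' x v * exp (- Q x)) + p' x v * exp (- Q x)))" for x
  have hd: "(h has_derivative D x) (at x)" for x
    unfolding hp D_def
    by (intro has_derivative_of_real has_derivative_mult has_derivative_exp has_derivative_minus)
       (use p'(1)[rule_format, of x] Q'(1)[rule_format, of x] in auto)
  then show "\<forall>x. h differentiable (at x)" unfolding differentiable_def by blast
  have "frechet_derivative h (at x) v = D x v" for x
    using frechet_derivative_at[OF hd[of x]] by simp
  then have "(\<lambda>x. frechet_derivative h (at x) v) =
     (\<lambda>x. complex_of_real ((p' x v - p x * Q' x v) * exp (- Q x)))"
    by (auto simp: D_def algebra_simps)
  moreover have "pf (\<lambda>x. p' x v - p x * Q' x v)"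
    using p p'(2)[rule_format, of v] Q'(2)[rule_format, of v] by (intro pf_diff pf_mult) auto
  ultimately show "(\<lambda>x. frechet_derivative h (at x) v) \<in> HG Q"
    unfolding HG_def by blast
qed

lemma iter_dd_HG:
  assumes Q: "pf Q" and h: "h \<in> HG Q"
  shows "iter_dd h vs \<in> HG Q"
proof (induction vs)
  case Nil then show ?case using h by simp
next
  case (Cons v vs) then show ?case using HG_deriv(2)[OF Q] by simp
qed

lemma exp_poly_bound:
  fixes r lam :: real and K :: nat
  assumes "r \<ge> 0" "lam > 0"
  shows "(1 + r) ^ K * exp (- lam * r\<^sup>2) \<le> exp (real K ^ 2 / (4 * lam))"
proof -
  have "(1 + r) ^ K \<le> exp r ^ K"
    using assms by (intro power_mono) (auto simp: exp_ge_add_one_self add.commute)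
  also have "\<dots> = exp (real K * r)" by (simp add: exp_of_nat_mult)
  finally have "(1 + r) ^ K * exp (- lam * r\<^sup>2) \<le> exp (real K * r) * exp (- lam * r\<^sup>2)"
    by (intro mult_right_mono) auto
  also have "\<dots> = exp (real K * r - lam * r\<^sup>2)" by (simp add: exp_add[symmetric])
  also have "\<dots> \<le> exp (real K ^ 2 / (4 * lam))"
  proof -
    have "0 \<le> (2 * lam * r - real K)\<^sup>2" by simp
    then have "real K * r - lam * r\<^sup>2 \<le> real K ^ 2 / (4 * lam)"
      using assms by (simp add: field_simps power2_eq_square)
    then show ?thesis by simp
  qed
  finally show ?thesis .
qed

lemma HG_decay:
  assumes Q: "pf Q" and lam: "lam > 0" and Qlow: "\<forall>z. Q z \<ge> lam * (norm z)\<^sup>2"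
    and h: "h \<in> HG Q"
  shows "\<exists>C. \<forall>x. norm x ^ n * norm (h x) \<le> C"
proof -
  obtain p where p: "pf p" and hp: "h = (\<lambda>z. complex_of_real (p z * exp (- Q z)))"
    using h unfolding HG_def by blast
  obtain C N where C: "C \<ge> 0" "\<forall>z. \<bar>p z\<bar> \<le> C * (1 + norm z) ^ N"
    using pf_bound[OF p] by blast
  have "norm x ^ n * norm (h x) \<le> C * exp (real (n + N) ^ 2 / (4 * lam))" for x
  proof -
    have "norm x ^ n * norm (h x) = norm x ^ n * (\<bar>p x\<bar> * exp (- Q x))"
      by (simp add: hp norm_mult)
    also have "\<dots> \<le> (1 + norm x) ^ n * (C * (1 + norm x) ^ N * exp (- lam * (norm x)\<^sup>2))"
      using C(1) C(2)[rule_format, of x] Qlow[rule_format, of x] lam by (intro mult_mono power_mono) auto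
    also have "\<dots> = C * ((1 + norm x) ^ (n + N) * exp (- lam * (norm x)\<^sup>2))"
      by (simp add: power_add algebra_simps)
    also have "\<dots> \<le> C * exp (real (n + N) ^ 2 / (4 * lam))"
      using C lam by (intro mult_left_mono exp_poly_bound) auto
    finally show ?thesis .
  qed
  then show ?thesis by blast
qed

lemma schwartz_HG:
  assumes Q: "pf Q" and lam: "lam > 0" and Qlow: "\<forall>z. Q z \<ge> lam * (norm z)\<^sup>2"
  shows "schwartz (\<lambda>z. complex_of_real (exp (- Q z)))"
proof -
  have h0: "(\<lambda>z. complex_of_real (exp (- Q z))) \<in> HG Q"
    unfolding HG_def by (rule CollectI, rule exI[of _ "\<lambda>_. 1"]) (auto intro: pf_const)
  show ?thesis unfolding schwartz_def
    using iter_dd_HG[OF Q h0] HG_deriv(1)[OF Q] HG_decay[OF Q lam Qlow] by blast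
qed



definition eg :: "real \<Rightarrow> real \<Rightarrow> real" where
  "eg s x = exp (- x\<^sup>2 / (2 * s\<^sup>2))"

lemma eg_pos: "eg s x > 0" by (simp add: eg_def)

lemma eg_meas[measurable]: "eg s \<in> borel_measurable borel"
  unfolding eg_def by measurable

lemma gauss1: assumes "s > 0"
  shows "has_bochner_integral lborel (eg s) (sqrt (2 * pi) * s)"
proof -
  have "has_bochner_integral lborel (\<lambda>x. normal_density 0 s x * (x - 0) ^ (2 * 0)) (fact (2 * 0) / ((2 / s\<^sup>2)^0 * fact 0))"
    using normal_moment_even[where k=0 and \<mu>=0 and \<sigma>=s] assms by simp
  then have "has_bochner_integral lborel (\<lambda>x. sqrt (2 * pi * s\<^sup>2) * normal_density 0 s x) (sqrt (2 * pi * s\<^sup>2) * 1)"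
    by (intro has_bochner_integral_mult_right) simp
  moreover have "(\<lambda>x. sqrt (2 * pi * s\<^sup>2) * normal_density 0 s x) = eg s"
    using assms by (auto simp: normal_density_def eg_def fun_eq_iff)
  moreover have "sqrt (2 * pi * s\<^sup>2) * 1 = sqrt (2 * pi) * s"
    using assms by (simp add: real_sqrt_mult)
  ultimately show ?thesis by simp
qed

lemma gauss2: assumes "s > 0"
  shows "has_bochner_integral lborel (\<lambda>x. eg s x * x\<^sup>2) (sqrt (2 * pi) * s * s\<^sup>2)"
proof -
  have "has_bochner_integral lborel (\<lambda>x. normal_density 0 s x * (x - 0) ^ (2 * 1)) (fact (2 * 1) / ((2 / s\<^sup>2)^1 * fact 1))"
    using normal_moment_even[where k=1 and \<mu>=0 and \<sigma>=s] assms by simp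
  then have "has_bochner_integral lborel (\<lambda>x. sqrt (2 * pi * s\<^sup>2) * (normal_density 0 s x * (x - 0) ^ (2 * 1))) (sqrt (2 * pi * s\<^sup>2) * (fact (2 * 1) / ((2 / s\<^sup>2)^1 * fact 1)))"
    by (intro has_bochner_integral_mult_right) simp
  moreover have "(\<lambda>x. sqrt (2 * pi * s\<^sup>2) * (normal_density 0 s x * (x - 0) ^ (2 * 1))) = (\<lambda>x. eg s x * x\<^sup>2)"
    using assms by (auto simp: normal_density_def eg_def fun_eq_iff)
  moreover have "sqrt (2 * pi * s\<^sup>2) * (fact (2 * 1) / ((2 / s\<^sup>2)^1 * fact 1)) = sqrt (2 * pi) * s * s\<^sup>2"
    using assms by (simp add: real_sqrt_mult)
  ultimately show ?thesis using assms by (simp add: real_sqrt_mult)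
qed

lemma hbi_prod:
  fixes f :: "'a::euclidean_space \<Rightarrow> real" and g :: "'b::euclidean_space \<Rightarrow> real"
  assumes f: "has_bochner_integral lborel f I" and g: "has_bochner_integral lborel g J"
    and f0: "\<And>x. f x \<ge> 0" and g0: "\<And>y. g y \<ge> 0"
  shows "has_bochner_integral lborel (\<lambda>z. f (fst z) * g (snd z)) (I * J)"
proof -
  have fm[measurable]: "f \<in> borel_measurable lborel" using borel_measurable_has_bochner_integral[OF f] .
  have gm[measurable]: "g \<in> borel_measurable lborel" using borel_measurable_has_bochner_integral[OF g] .
  have fm'[measurable]: "f \<in> borel_measurable borel" using fm by simp
  have gm'[measurable]: "g \<in> borel_measurable borel" using gm by simp
  have fI: "(\<integral>\<^sup>+ x. ennreal (f x) \<partial>lborel) = ennreal I"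
    using f f0 by (simp add: has_bochner_integral_iff nn_integral_eq_integral)
  have gI: "(\<integral>\<^sup>+ x. ennreal (g x) \<partial>lborel) = ennreal J"
    using g g0 by (simp add: has_bochner_integral_iff nn_integral_eq_integral)
  have I0: "I \<ge> 0" using f f0 by (auto simp: has_bochner_integral_iff intro: integral_nonneg_AE)
  have J0: "J \<ge> 0" using g g0 by (auto simp: has_bochner_integral_iff intro: integral_nonneg_AE)
  have "(\<integral>\<^sup>+ z. ennreal (f (fst z) * g (snd z)) \<partial>(lborel :: ('a \<times> 'b) measure))
      = (\<integral>\<^sup>+ z. ennreal (f (fst z) * g (snd z)) \<partial>(lborel \<Otimes>\<^sub>M lborel))"
    by (simp add: lborel_prod)
  also have "\<dots> = (\<integral>\<^sup>+ x. \<integral>\<^sup>+ y. ennreal (f x * g y) \<partial>lborel \<partial>lborel)"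
    by (subst lborel.nn_integral_fst[symmetric]) auto
  also have "\<dots> = (\<integral>\<^sup>+ x. ennreal (f x) * ennreal J \<partial>lborel)"
    using f0 g0 by (simp add: ennreal_mult nn_integral_cmult gI)
  also have "\<dots> = ennreal I * ennreal J"
    by (simp add: nn_integral_multc fI)
  also have "\<dots> = ennreal (I * J)" using I0 J0 by (simp add: ennreal_mult)
  moreover have "(\<lambda>z. f (fst z) * g (snd z)) \<in> borel_measurable (borel :: ('a \<times> 'b) measure)"
    by (subst borel_prod[symmetric]) measurable
  ultimately show ?thesis
    using f0 g0 I0 J0 by (intro has_bochner_integral_nn_integral) auto
qed

definition sep4 :: "(real \<Rightarrow> real) \<Rightarrow> (real \<Rightarrow> real) \<Rightarrow> (real \<Rightarrow> real) \<Rightarrow> (real \<Rightarrow> real) \<Rightarrow> R4 \<Rightarrow> real" where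
  "sep4 f1 f2 f3 f4 z = (f1 (fst (fst z)) * f2 (snd (fst z))) * (f3 (fst (snd z)) * f4 (snd (snd z)))"

lemma hbi_sep4:
  assumes "has_bochner_integral lborel f1 I1" "has_bochner_integral lborel f2 I2"
    "has_bochner_integral lborel f3 I3" "has_bochner_integral lborel f4 I4"
    "\<And>x. f1 x \<ge> 0" "\<And>x. f2 x \<ge> 0" "\<And>x. f3 x \<ge> 0" "\<And>x. f4 x \<ge> 0"
  shows "has_bochner_integral lborel (sep4 f1 f2 f3 f4) ((I1 * I2) * (I3 * I4))"
  unfolding sep4_def
  by (rule hbi_prod[of "\<lambda>z. f1 (fst z) * f2 (snd z)" _ "\<lambda>z. f3 (fst z) * f4 (snd z)", simplified])
     (use assms in \<open>auto intro!: hbi_prod\<close>)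



definition GS :: "real \<Rightarrow> real \<Rightarrow> real \<Rightarrow> real \<Rightarrow> R4 \<Rightarrow> real" where
  "GS s1 s2 s3 s4 = sep4 (eg s1) (eg s2) (eg s3) (eg s4)"

lemma inner_R4: "(z::R4) \<bullet> y = fst (fst z) * fst (fst y) + snd (fst z) * snd (fst y) + fst (snd z) * fst (snd y) + snd (snd z) * snd (snd y)"
  by (simp add: inner_prod_def)

lemma norm_R4: "(norm (z::R4))\<^sup>2 = (fst (fst z))\<^sup>2 + (snd (fst z))\<^sup>2 + (fst (snd z))\<^sup>2 + (snd (snd z))\<^sup>2"
  unfolding power2_norm_eq_inner inner_R4 by (simp add: power2_eq_square)

lemma schwartz_GS:
  assumes s: "s1 > 0" "s2 > 0" "s3 > 0" "s4 > 0"
  shows "schwartz (\<lambda>z. complex_of_real (GS s1 s2 s3 s4 z))"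
proof -
  define w1 where "w1 = 1 / (2 * s1\<^sup>2)"
  define w2 where "w2 = 1 / (2 * s2\<^sup>2)"
  define w3 where "w3 = 1 / (2 * s3\<^sup>2)"
  define w4 where "w4 = 1 / (2 * s4\<^sup>2)"
  define e1 :: R4 where "e1 = ((1,0),(0,0))"
  define e2 :: R4 where "e2 = ((0,1),(0,0))"
  define e3 :: R4 where "e3 = ((0,0),(1,0))"
  define e4 :: R4 where "e4 = ((0,0),(0,1))"
  define Q where "Q z = w1 * ((z \<bullet> e1) * (z \<bullet> e1)) + w2 * ((z \<bullet> e2) * (z \<bullet> e2))
     + w3 * ((z \<bullet> e3) * (z \<bullet> e3)) + w4 * ((z \<bullet> e4) * (z \<bullet> e4))" for z
  have Qpf: "pf Q" unfolding Q_def
    by (intro pf_add pf_cmult pf_mult pf_lin)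
  define lam where "lam = min (min w1 w2) (min w3 w4)"
  have wpos: "w1 > 0" "w2 > 0" "w3 > 0" "w4 > 0" using s by (auto simp: w1_def w2_def w3_def w4_def)
  then have lam: "lam > 0" by (simp add: lam_def)
  have Qlow: "\<forall>z. Q z \<ge> lam * (norm z)\<^sup>2"
  proof
    fix z :: R4
    have "lam * (norm z)\<^sup>2 = lam * (fst (fst z))\<^sup>2 + lam * (snd (fst z))\<^sup>2 + lam * (fst (snd z))\<^sup>2 + lam * (snd (snd z))\<^sup>2"
      by (simp add: norm_R4 algebra_simps)
    also have "\<dots> \<le> w1 * (fst (fst z))\<^sup>2 + w2 * (snd (fst z))\<^sup>2 + w3 * (fst (snd z))\<^sup>2 + w4 * (snd (snd z))\<^sup>2"
      by (intro add_mono mult_right_mono) (auto simp: lam_def)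
    also have "\<dots> = Q z" by (simp add: Q_def e1_def e2_def e3_def e4_def inner_R4 power2_eq_square)
    finally show "Q z \<ge> lam * (norm z)\<^sup>2" .
  qed
  have "(\<lambda>z. complex_of_real (GS s1 s2 s3 s4 z)) = (\<lambda>z. complex_of_real (exp (- Q z)))"
  proof
    fix z :: R4
    have "GS s1 s2 s3 s4 z = exp (- Q z)"
      by (simp add: GS_def sep4_def eg_def Q_def e1_def e2_def e3_def e4_def inner_R4 w1_def w2_def w3_def w4_def
          exp_add[symmetric] power2_eq_square field_simps)
    then show "complex_of_real (GS s1 s2 s3 s4 z) = complex_of_real (exp (- Q z))" by simp
  qed
  then show ?thesis using schwartz_HG[OF Qpf lam Qlow] by simp
qed

lemma cos_lower: "cos (x::real) \<ge> 1 - x\<^sup>2 / 2"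
proof -
  have "cos x = cos (2 * (x / 2))" by simp
  also have "\<dots> = 1 - 2 * (sin (x / 2))\<^sup>2" by (rule cos_double_sin)
  finally have c: "cos x = 1 - 2 * (sin (x / 2))\<^sup>2" .
  have "(sin (x / 2))\<^sup>2 \<le> (x / 2)\<^sup>2"
    by (metis abs_le_square_iff abs_sin_x_le_abs_x)
  then show ?thesis using c by (simp add: power2_eq_square field_simps)
qed

lemma sq4: "(a + b + c + d :: real)\<^sup>2 \<le> 4 * (a\<^sup>2 + b\<^sup>2 + c\<^sup>2 + d\<^sup>2)"
proof -
  have "4 * (a\<^sup>2 + b\<^sup>2 + c\<^sup>2 + d\<^sup>2) - (a + b + c + d)\<^sup>2 =
     (a-b)\<^sup>2 + (a-c)\<^sup>2 + (a-d)\<^sup>2 + (b-c)\<^sup>2 + (b-d)\<^sup>2 + (c-d)\<^sup>2"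
    by (simp add: power2_eq_square algebra_simps)
  moreover have "(a-b)\<^sup>2 + (a-c)\<^sup>2 + (a-d)\<^sup>2 + (b-c)\<^sup>2 + (b-d)\<^sup>2 + (c-d)\<^sup>2 \<ge> 0" by simp
  ultimately show ?thesis by linarith
qed

lemma hbi_GS:
  assumes s: "s1 > 0" "s2 > 0" "s3 > 0" "s4 > 0"
  shows "has_bochner_integral lborel (GS s1 s2 s3 s4) ((2*pi)\<^sup>2 * (s1 * s2 * s3 * s4))"
proof -
  have "has_bochner_integral lborel (GS s1 s2 s3 s4)
     ((sqrt (2 * pi) * s1 * (sqrt (2 * pi) * s2)) * (sqrt (2 * pi) * s3 * (sqrt (2 * pi) * s4)))"
    unfolding GS_def using s by (intro hbi_sep4 gauss1) (auto intro: less_imp_le eg_pos)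
  moreover have "(sqrt (2 * pi) * s1 * (sqrt (2 * pi) * s2)) * (sqrt (2 * pi) * s3 * (sqrt (2 * pi) * s4))
     = (2*pi)\<^sup>2 * (s1 * s2 * s3 * s4)"
    by (simp add: power2_eq_square algebra_simps)
  ultimately show ?thesis by simp
qed

lemma fourier_GS:
  assumes s: "s1 > 0" "s2 > 0" "s3 > 0" "s4 > 0"
  shows "Re (fourier (\<lambda>z. complex_of_real (GS s1 s2 s3 s4 z)) \<xi>) \<ge>
    (2*pi)\<^sup>2 * (s1 * s2 * s3 * s4) * (1 - 8 * pi\<^sup>2 * ((fst (fst \<xi>) * s1)\<^sup>2 + (snd (fst \<xi>) * s2)\<^sup>2
       + (fst (snd \<xi>) * s3)\<^sup>2 + (snd (snd \<xi>) * s4)\<^sup>2))"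
proof -
  define I0 where "I0 = (2*pi)\<^sup>2 * (s1 * s2 * s3 * s4)"
  define G where "G = GS s1 s2 s3 s4"
  have egn: "\<And>s x. 0 \<le> eg s x" by (simp add: eg_pos less_imp_le)
  have egn2: "\<And>s x. 0 \<le> eg s x * x\<^sup>2" by (simp add: eg_pos less_imp_le)
  have hG: "has_bochner_integral lborel G I0" unfolding G_def I0_def using hbi_GS[OF s] .
  have h1: "has_bochner_integral lborel (\<lambda>z. G z * (fst (fst z))\<^sup>2) (I0 * s1\<^sup>2)"
  proof -
    have "has_bochner_integral lborel (sep4 (\<lambda>x. eg s1 x * x\<^sup>2) (eg s2) (eg s3) (eg s4))
      ((sqrt (2 * pi) * s1 * s1\<^sup>2 * (sqrt (2 * pi) * s2)) * (sqrt (2 * pi) * s3 * (sqrt (2 * pi) * s4)))"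
      using s by (intro hbi_sep4 gauss1 gauss2 egn egn2) auto
    moreover have "sep4 (\<lambda>x. eg s1 x * x\<^sup>2) (eg s2) (eg s3) (eg s4) = (\<lambda>z. G z * (fst (fst z))\<^sup>2)"
      by (auto simp: G_def GS_def sep4_def fun_eq_iff)
    moreover have "(sqrt (2 * pi) * s1 * s1\<^sup>2 * (sqrt (2 * pi) * s2)) * (sqrt (2 * pi) * s3 * (sqrt (2 * pi) * s4)) = I0 * s1\<^sup>2"
      by (simp add: I0_def power2_eq_square algebra_simps)
    ultimately show ?thesis by simp
  qed
  have h2: "has_bochner_integral lborel (\<lambda>z. G z * (snd (fst z))\<^sup>2) (I0 * s2\<^sup>2)"
  proof -
    have "has_bochner_integral lborel (sep4 (eg s1) (\<lambda>x. eg s2 x * x\<^sup>2) (eg s3) (eg s4))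
      ((sqrt (2 * pi) * s1 * (sqrt (2 * pi) * s2 * s2\<^sup>2)) * (sqrt (2 * pi) * s3 * (sqrt (2 * pi) * s4)))"
      using s by (intro hbi_sep4 gauss1 gauss2 egn egn2) auto
    moreover have "sep4 (eg s1) (\<lambda>x. eg s2 x * x\<^sup>2) (eg s3) (eg s4) = (\<lambda>z. G z * (snd (fst z))\<^sup>2)"
      by (auto simp: G_def GS_def sep4_def fun_eq_iff)
    moreover have "(sqrt (2 * pi) * s1 * (sqrt (2 * pi) * s2 * s2\<^sup>2)) * (sqrt (2 * pi) * s3 * (sqrt (2 * pi) * s4)) = I0 * s2\<^sup>2"
      by (simp add: I0_def power2_eq_square algebra_simps)
    ultimately show ?thesis by simp
  qed
  have h3: "has_bochner_integral lborel (\<lambda>z. G z * (fst (snd z))\<^sup>2) (I0 * s3\<^sup>2)"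
  proof -
    have "has_bochner_integral lborel (sep4 (eg s1) (eg s2) (\<lambda>x. eg s3 x * x\<^sup>2) (eg s4))
      ((sqrt (2 * pi) * s1 * (sqrt (2 * pi) * s2)) * (sqrt (2 * pi) * s3 * s3\<^sup>2 * (sqrt (2 * pi) * s4)))"
      using s by (intro hbi_sep4 gauss1 gauss2 egn egn2) auto
    moreover have "sep4 (eg s1) (eg s2) (\<lambda>x. eg s3 x * x\<^sup>2) (eg s4) = (\<lambda>z. G z * (fst (snd z))\<^sup>2)"
      by (auto simp: G_def GS_def sep4_def fun_eq_iff)
    moreover have "(sqrt (2 * pi) * s1 * (sqrt (2 * pi) * s2)) * (sqrt (2 * pi) * s3 * s3\<^sup>2 * (sqrt (2 * pi) * s4)) = I0 * s3\<^sup>2"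
      by (simp add: I0_def power2_eq_square algebra_simps)
    ultimately show ?thesis by simp
  qed
  have h4: "has_bochner_integral lborel (\<lambda>z. G z * (snd (snd z))\<^sup>2) (I0 * s4\<^sup>2)"
  proof -
    have "has_bochner_integral lborel (sep4 (eg s1) (eg s2) (eg s3) (\<lambda>x. eg s4 x * x\<^sup>2))
      ((sqrt (2 * pi) * s1 * (sqrt (2 * pi) * s2)) * (sqrt (2 * pi) * s3 * (sqrt (2 * pi) * s4 * s4\<^sup>2)))"
      using s by (intro hbi_sep4 gauss1 gauss2 egn egn2) auto
    moreover have "sep4 (eg s1) (eg s2) (eg s3) (\<lambda>x. eg s4 x * x\<^sup>2) = (\<lambda>z. G z * (snd (snd z))\<^sup>2)"
      by (auto simp: G_def GS_def sep4_def fun_eq_iff)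
    moreover have "(sqrt (2 * pi) * s1 * (sqrt (2 * pi) * s2)) * (sqrt (2 * pi) * s3 * (sqrt (2 * pi) * s4 * s4\<^sup>2)) = I0 * s4\<^sup>2"
      by (simp add: I0_def power2_eq_square algebra_simps)
    ultimately show ?thesis by simp
  qed
  define a1 where "a1 = fst (fst \<xi>)"
  define a2 where "a2 = snd (fst \<xi>)"
  define a3 where "a3 = fst (snd \<xi>)"
  define a4 where "a4 = snd (snd \<xi>)"
  define L where "L z = G z - 8 * pi\<^sup>2 * (a1\<^sup>2 * (G z * (fst (fst z))\<^sup>2) + a2\<^sup>2 * (G z * (snd (fst z))\<^sup>2)
      + a3\<^sup>2 * (G z * (fst (snd z))\<^sup>2) + a4\<^sup>2 * (G z * (snd (snd z))\<^sup>2))" for z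
  have hL: "has_bochner_integral lborel L (I0 - 8 * pi\<^sup>2 * (a1\<^sup>2 * (I0 * s1\<^sup>2) + a2\<^sup>2 * (I0 * s2\<^sup>2)
      + a3\<^sup>2 * (I0 * s3\<^sup>2) + a4\<^sup>2 * (I0 * s4\<^sup>2)))"
    unfolding L_def
    by (intro has_bochner_integral_diff has_bochner_integral_add has_bochner_integral_mult_right hG h1 h2 h3 h4)
  define F where "F z = complex_of_real (G z) * cis (- 2 * pi * (z \<bullet> \<xi>))" for z
  have Gm: "G \<in> borel_measurable lborel" using borel_measurable_has_bochner_integral[OF hG] .
  have cm: "(\<lambda>z::R4. cis (- 2 * pi * (z \<bullet> \<xi>))) \<in> borel_measurable lborel"
    unfolding measurable_lborel2
    by (intro borel_measurable_continuous_onI continuous_intros)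
  have Fm: "F \<in> borel_measurable lborel"
    unfolding F_def using Gm cm by measurable
  have Gint: "integrable lborel G" using hG by (simp add: has_bochner_integral_iff)
  have Fb: "AE x in lborel. norm (F x) \<le> norm (G x)"
    by (auto simp: F_def norm_mult)
  have Fint: "integrable lborel F"
    by (rule Bochner_Integration.integrable_bound[OF Gint Fm Fb])
  have ReF: "Re (F z) = G z * cos (2 * pi * (z \<bullet> \<xi>))" for z
    by (simp add: F_def)
  have Lle: "L z \<le> Re (F z)" for z
  proof -
    have G0: "G z \<ge> 0" by (simp add: G_def GS_def sep4_def egn)
    have "(2 * pi * (z \<bullet> \<xi>))\<^sup>2 = 4 * pi\<^sup>2 * (fst (fst z) * a1 + snd (fst z) * a2 + fst (snd z) * a3 + snd (snd z) * a4)\<^sup>2"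
      by (simp add: inner_R4 a1_def a2_def a3_def a4_def power2_eq_square)
    also have "\<dots> \<le> 4 * pi\<^sup>2 * (4 * ((fst (fst z) * a1)\<^sup>2 + (snd (fst z) * a2)\<^sup>2 + (fst (snd z) * a3)\<^sup>2 + (snd (snd z) * a4)\<^sup>2))"
      by (intro mult_left_mono sq4) auto
    finally have "cos (2 * pi * (z \<bullet> \<xi>)) \<ge> 1 - 8 * pi\<^sup>2 * ((fst (fst z) * a1)\<^sup>2 + (snd (fst z) * a2)\<^sup>2 + (fst (snd z) * a3)\<^sup>2 + (snd (snd z) * a4)\<^sup>2)"
      using cos_lower[of "2 * pi * (z \<bullet> \<xi>)"] by linarith
    then have "G z * (1 - 8 * pi\<^sup>2 * ((fst (fst z) * a1)\<^sup>2 + (snd (fst z) * a2)\<^sup>2 + (fst (snd z) * a3)\<^sup>2 + (snd (snd z) * a4)\<^sup>2))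
        \<le> G z * cos (2 * pi * (z \<bullet> \<xi>))"
      using G0 by (simp add: mult_left_mono)
    moreover have "L z = G z * (1 - 8 * pi\<^sup>2 * ((fst (fst z) * a1)\<^sup>2 + (snd (fst z) * a2)\<^sup>2 + (fst (snd z) * a3)\<^sup>2 + (snd (snd z) * a4)\<^sup>2))"
      by (simp add: L_def power2_eq_square algebra_simps)
    ultimately show ?thesis using ReF by simp
  qed
  have "integral\<^sup>L lborel L \<le> integral\<^sup>L lborel (\<lambda>z. Re (F z))"
    using hL Fint Lle by (intro integral_mono) (auto simp: has_bochner_integral_iff intro: integrable_Re)
  also have "integral\<^sup>L lborel (\<lambda>z. Re (F z)) = Re (integral\<^sup>L lborel F)"
    by (rule integral_bounded_linear[OF bounded_linear_Re Fint])
  also have "integral\<^sup>L lborel F = fourier (\<lambda>z. complex_of_real (GS s1 s2 s3 s4 z)) \<xi>"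
    unfolding fourier_def F_def[abs_def] G_def by simp
  finally have "integral\<^sup>L lborel L \<le> Re (fourier (\<lambda>z. complex_of_real (GS s1 s2 s3 s4 z)) \<xi>)" .
  moreover have "integral\<^sup>L lborel L = I0 * (1 - 8 * pi\<^sup>2 * ((a1 * s1)\<^sup>2 + (a2 * s2)\<^sup>2 + (a3 * s3)\<^sup>2 + (a4 * s4)\<^sup>2))"
    using hL by (simp add: has_bochner_integral_iff power2_eq_square algebra_simps)
  ultimately show ?thesis by (simp add: I0_def a1_def a2_def a3_def a4_def)
qed



lemma dil_dil:
  assumes "t > 0" "u > 0"
  shows "dil a1 a2 u (dil a1 a2 t y) = dil a1 a2 (u * t) y"
  using assms by (simp add: dil_def powr_mult)

lemma V1_char:
  assumes a1: "a1 > 0"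
  shows "x \<in> V1set a1 a2 c d \<longleftrightarrow>
    (0 < fst x \<and> fst x < 1 \<and> c < snd x / fst x powr (a2 / a1) \<and> snd x / fst x powr (a2 / a1) < d)"
proof
  assume "x \<in> V1set a1 a2 c d"
  then obtain t s where ts: "x = dil a1 a2 t (1, s)" "0 < t" "t < 1" "c < s" "s < d"
    unfolding V1set_def by blast
  have f: "fst x = t powr a1" and sn: "snd x = t powr a2 * s" using ts by (auto simp: dil_def)
  have "fst x powr (a2 / a1) = t powr a2"
    unfolding f using a1 by (simp add: powr_powr)
  then have "snd x / fst x powr (a2 / a1) = s" using ts(2) by (simp add: sn)
  moreover have "0 < fst x" "fst x < 1" using ts(2-5) a1 by (auto simp: f powr01_less_one)
  ultimately show "0 < fst x \<and> fst x < 1 \<and> c < snd x / fst x powr (a2 / a1) \<and> snd x / fst x powr (a2 / a1) < d"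
    using ts by auto
next
  assume h: "0 < fst x \<and> fst x < 1 \<and> c < snd x / fst x powr (a2 / a1) \<and> snd x / fst x powr (a2 / a1) < d"
  define t where "t = fst x powr (1 / a1)"
  define s where "s = snd x / fst x powr (a2 / a1)"
  have t0: "0 < t" using h by (simp add: t_def)
  have t1: "t < 1" using h a1 by (simp add: t_def powr01_less_one)
  have "t powr a1 = fst x" using h a1 by (simp add: t_def powr_powr)
  moreover have "t powr a2 = fst x powr (a2 / a1)" using h a1 by (simp add: t_def powr_powr)
  ultimately have "dil a1 a2 t (1, s) = x" using h by (simp add: dil_def s_def)
  then show "x \<in> V1set a1 a2 c d" unfolding V1set_def
    by (intro CollectI exI[of _ t] exI[of _ s]) (use t0 t1 h s_def in auto)
qed

lemma V1_sub_V:
  assumes "a < c" "d < b"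
  shows "V1set a1 a2 c d \<subseteq> Vset a1 a2 a b"
proof
  fix x assume "x \<in> V1set a1 a2 c d"
  then obtain t s where ts: "x = dil a1 a2 t (1, s)" "0 < t" "t < 1" "c < s" "s < d"
    unfolding V1set_def by blast
  show "x \<in> Vset a1 a2 a b" unfolding Vset_def
    by (intro CollectI exI[of _ t] exI[of _ s]) (use ts assms in auto)
qed

lemma V1_dil:
  assumes "0 < u" "u \<le> 1" "x \<in> V1set a1 a2 c d"
  shows "dil a1 a2 u x \<in> V1set a1 a2 c d"
proof -
  obtain t s where ts: "x = dil a1 a2 t (1, s)" "0 < t" "t < 1" "c < s" "s < d"
    using assms unfolding V1set_def by blast
  have "dil a1 a2 u x = dil a1 a2 (u * t) (1, s)" using ts assms by (simp add: dil_dil)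
  moreover have "u * t < 1"
  proof -
    have "u * t \<le> 1 * t" using ts assms by (intro mult_right_mono) auto
    then show ?thesis using ts(3) by linarith
  qed
  moreover have "0 < u * t" using ts assms by simp
  ultimately show ?thesis unfolding V1set_def
    by (intro CollectI exI[of _ "u * t"] exI[of _ s]) (use ts in auto)
qed

lemma V1_meas:
  assumes a1: "a1 > 0"
  shows "V1set a1 a2 c d \<in> sets lborel"
proof -
  have "V1set a1 a2 c d = {x \<in> space borel. 0 < fst x \<and> fst x < 1 \<and> c < snd x / fst x powr (a2 / a1) \<and> snd x / fst x powr (a2 / a1) < d}"
    using V1_char[OF a1] by auto
  also have "\<dots> = {x \<in> space (borel \<Otimes>\<^sub>M borel). 0 < fst x \<and> fst x < 1 \<and> c < snd x / fst x powr (a2 / a1) \<and> snd x / fst x powr (a2 / a1) < d}"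
    by (simp add: space_pair_measure)
  also have "\<dots> \<in> sets (borel \<Otimes>\<^sub>M borel)" by measurable
  finally have "V1set a1 a2 c d \<in> sets (borel \<Otimes>\<^sub>M borel)" .
  then show ?thesis by (simp only: borel_prod sets_lborel)
qed

lemma V1_nhd:
  assumes a1: "a1 > 0" and cd: "c < d"
  shows "\<exists>x0 e. x0 \<in> V1set a1 a2 c d \<and> e > 0 \<and> (\<forall>x. dist x x0 < e \<longrightarrow> x \<in> V1set a1 a2 c d)"
proof -
  define x0 where "x0 = dil a1 a2 (1/2) (1, (c + d) / 2)"
  have x0V: "x0 \<in> V1set a1 a2 c d" unfolding V1set_def x0_def
    by (intro CollectI exI[of _ "1/2"] exI[of _ "(c + d) / 2"]) (use cd in auto)
  define h where "h x = snd x / fst x powr (a2 / a1)" for x :: "real \<times> real"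
  have hx0: "0 < fst x0 \<and> fst x0 < 1 \<and> c < h x0 \<and> h x0 < d" using x0V V1_char[OF a1] h_def by auto
  have ch: "isCont h x0"
    unfolding h_def using hx0 by (intro continuous_intros) auto
  have cf: "isCont (\<lambda>x::real\<times>real. fst x) x0" by (intro continuous_intros)
  have ev: "eventually (\<lambda>x. 0 < fst x \<and> fst x < 1 \<and> c < h x \<and> h x < d) (nhds x0)"
    using hx0 ch cf unfolding isCont_def
    by (intro eventually_conj order_tendstoD) (auto simp: tendsto_at_iff_tendsto_nhds[symmetric])
  then obtain e where e: "e > 0" "\<forall>x. dist x x0 < e \<longrightarrow> 0 < fst x \<and> fst x < 1 \<and> c < h x \<and> h x < d"
    unfolding eventually_nhds_metric by blast
  then show ?thesis using x0V V1_char[OF a1] h_def by (intro exI[of _ x0] exI[of _ e]) auto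
qed


lemma analytic_bound:
  assumes an: "real_analytic_on2 f S" and x0: "x0 \<in> S"
  shows "\<exists>r>0. \<forall>\<eta>. 0 < \<eta> \<and> 2 * \<eta> < r \<and> (fst x0 + \<eta>, snd x0 + \<eta>) \<in> S \<longrightarrow>
     (\<exists>M. \<forall>x\<in>S. \<bar>fst x - fst x0\<bar> \<le> \<eta> \<and> \<bar>snd x - snd x0\<bar> \<le> \<eta> \<longrightarrow> \<bar>f x\<bar> \<le> M)"
proof -
  obtain r and cc :: "nat \<Rightarrow> nat \<Rightarrow> real" where r: "r > 0"
    and hs: "\<forall>x\<in>ball x0 r \<inter> S. ((\<lambda>(i, j). cc i j * (fst x - fst x0) ^ i * (snd x - snd x0) ^ j) has_sum f x) UNIV"
    using an x0 unfolding real_analytic_on2_def by meson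
  have sq: "dist x x0 < r" if "\<bar>fst x - fst x0\<bar> \<le> \<eta>" "\<bar>snd x - snd x0\<bar> \<le> \<eta>" "2 * \<eta> < r" for x :: "real \<times> real" and \<eta>
  proof -
    have "dist x x0 = sqrt ((fst x - fst x0)\<^sup>2 + (snd x - snd x0)\<^sup>2)"
      by (cases x, cases x0) (simp add: dist_Pair_Pair dist_real_def)
    also have "\<dots> \<le> sqrt ((2 * \<eta>)\<^sup>2)"
    proof (rule real_sqrt_le_mono)
      have "(fst x - fst x0)\<^sup>2 \<le> \<eta>\<^sup>2" "(snd x - snd x0)\<^sup>2 \<le> \<eta>\<^sup>2"
        using that by (auto simp: abs_le_square_iff[symmetric])
      then show "(fst x - fst x0)\<^sup>2 + (snd x - snd x0)\<^sup>2 \<le> (2 * \<eta>)\<^sup>2"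
        using zero_le_square[of \<eta>] unfolding power2_eq_square by linarith
    qed
    also have "\<dots> = 2 * \<eta>"
    proof -
      have e0: "0 \<le> \<eta>" using that(1) abs_ge_zero order_trans by blast
      show ?thesis unfolding real_sqrt_abs using e0 by simp
    qed
    finally show ?thesis using that by simp
  qed
  show ?thesis
  proof (rule exI[of _ r], intro conjI allI impI r)
    fix \<eta> :: real assume h: "0 < \<eta> \<and> 2 * \<eta> < r \<and> (fst x0 + \<eta>, snd x0 + \<eta>) \<in> S"
    define xh where "xh = (fst x0 + \<eta>, snd x0 + \<eta>)"
    have "xh \<in> ball x0 r \<inter> S" using h sq[of xh \<eta>] by (auto simp: xh_def dist_commute)
    then have "((\<lambda>(i, j). cc i j * (fst xh - fst x0) ^ i * (snd xh - snd x0) ^ j) has_sum f xh) UNIV"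
      using hs by blast
    then have "((\<lambda>(i, j). cc i j * \<eta> ^ i * \<eta> ^ j) has_sum f xh) UNIV"
      by (simp add: xh_def)
    then have "(\<lambda>(i, j). cc i j * \<eta> ^ i * \<eta> ^ j) summable_on UNIV" by (rule has_sum_imp_summable)
    then have sh: "(\<lambda>ij. norm ((\<lambda>(i, j). cc i j * \<eta> ^ i * \<eta> ^ j) ij)) summable_on UNIV"
      using summable_on_iff_abs_summable_on_real by blast
    define M where "M = infsum (\<lambda>ij. norm ((\<lambda>(i, j). cc i j * \<eta> ^ i * \<eta> ^ j) ij)) UNIV"
    show "\<exists>M. \<forall>x\<in>S. \<bar>fst x - fst x0\<bar> \<le> \<eta> \<and> \<bar>snd x - snd x0\<bar> \<le> \<eta> \<longrightarrow> \<bar>f x\<bar> \<le> M"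
    proof (intro exI[of _ M] ballI impI)
      fix x assume xS: "x \<in> S" and xq: "\<bar>fst x - fst x0\<bar> \<le> \<eta> \<and> \<bar>snd x - snd x0\<bar> \<le> \<eta>"
      define g where "g = (\<lambda>(i, j). cc i j * (fst x - fst x0) ^ i * (snd x - snd x0) ^ j)"
      have "x \<in> ball x0 r \<inter> S" using xS xq h sq[of x \<eta>] by (auto simp: dist_commute)
      then have hg: "(g has_sum f x) UNIV" using hs by (simp add: g_def)
      then have fx: "f x = infsum g UNIV" by (simp add: infsumI)
      have ga: "(\<lambda>ij. norm (g ij)) summable_on UNIV"
        using has_sum_imp_summable[OF hg] summable_on_iff_abs_summable_on_real by blast
      have "\<bar>f x\<bar> = norm (infsum g UNIV)" by (simp add: fx)
      also have "\<dots> \<le> infsum (\<lambda>ij. norm (g ij)) UNIV" by (rule norm_infsum_bound[OF ga])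
      also have "\<dots> \<le> M" unfolding M_def
      proof (rule infsum_mono[OF ga sh])
        fix ij :: "nat \<times> nat" assume "ij \<in> UNIV"
        obtain i j where ij: "ij = (i, j)" by (cases ij)
        have "\<bar>fst x - fst x0\<bar> ^ i \<le> \<eta> ^ i" "\<bar>snd x - snd x0\<bar> ^ j \<le> \<eta> ^ j"
          using xq by (auto intro: power_mono)
        then have "\<bar>cc i j\<bar> * \<bar>fst x - fst x0\<bar> ^ i * \<bar>snd x - snd x0\<bar> ^ j \<le> \<bar>cc i j\<bar> * \<eta> ^ i * \<eta> ^ j"
          using h by (intro mult_mono) (auto intro: mult_left_mono)
        then show "norm (g ij) \<le> norm ((\<lambda>(i, j). cc i j * \<eta> ^ i * \<eta> ^ j) ij)"
          using h by (simp add: g_def ij abs_mult power_abs)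
      qed
      finally show "\<bar>f x\<bar> \<le> M" .
    qed
  qed
qed



lemma GS_pos: "s1 > 0 \<Longrightarrow> s2 > 0 \<Longrightarrow> s3 > 0 \<Longrightarrow> s4 > 0 \<Longrightarrow> GS s1 s2 s3 s4 z > 0"
  by (simp add: GS_def sep4_def eg_pos)

lemma eg_le1: "eg s x \<le> 1"
  by (simp add: eg_def)

lemma GS_le1: "GS s1 s2 s3 s4 z \<le> 1"
  unfolding GS_def sep4_def
  by (intro mult_le_one) (auto simp: eg_le1 eg_pos less_imp_le)

lemma eg_powr: assumes "s > 0" "P > 0" shows "eg s x powr P = eg (s / sqrt P) x"
  using assms by (simp add: eg_def exp_powr_real power_divide field_simps)

lemma GS_powr: assumes "s1 > 0" "s2 > 0" "s3 > 0" "s4 > 0" "P > 0"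
  shows "GS s1 s2 s3 s4 z powr P = GS (s1 / sqrt P) (s2 / sqrt P) (s3 / sqrt P) (s4 / sqrt P) z"
  using assms by (simp add: GS_def sep4_def powr_mult eg_pos less_imp_le eg_powr)

lemma Lp_GS_fin:
  assumes s: "s1 > 0" "s2 > 0" "s3 > 0" "s4 > 0" and P: "P \<ge> 1"
  shows "Lp_norm lborel (ennreal P) (\<lambda>z. complex_of_real (GS s1 s2 s3 s4 z))
     = ennreal (((2*pi)\<^sup>2 * (s1 * s2 * s3 * s4) / P\<^sup>2) powr (1 / P))"
proof -
  have P0: "P > 0" using P by simp
  have sP: "s1 / sqrt P > 0" "s2 / sqrt P > 0" "s3 / sqrt P > 0" "s4 / sqrt P > 0" using s P0 by auto
  have "(\<integral>\<^sup>+ z. ennreal (norm (complex_of_real (GS s1 s2 s3 s4 z)) powr P) \<partial>lborel)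
      = (\<integral>\<^sup>+ z. ennreal (GS (s1 / sqrt P) (s2 / sqrt P) (s3 / sqrt P) (s4 / sqrt P) z) \<partial>lborel)"
    using GS_pos[OF s] GS_powr[OF s P0] by (intro nn_integral_cong) (simp add: less_imp_le)
  also have "\<dots> = ennreal ((2*pi)\<^sup>2 * (s1 / sqrt P * (s2 / sqrt P) * (s3 / sqrt P) * (s4 / sqrt P)))"
    using hbi_GS[OF sP] GS_pos[OF sP]
    by (subst nn_integral_eq_integral) (auto simp: has_bochner_integral_iff less_imp_le)
  also have "(2*pi)\<^sup>2 * (s1 / sqrt P * (s2 / sqrt P) * (s3 / sqrt P) * (s4 / sqrt P))
      = (2*pi)\<^sup>2 * (s1 * s2 * s3 * s4) / P\<^sup>2"
  proof -
    have "sqrt P * sqrt P * (sqrt P * sqrt P) = P\<^sup>2" using P0 by (simp add: power2_eq_square)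
    then show ?thesis by (simp add: field_simps)
  qed
  finally have I: "(\<integral>\<^sup>+ z. ennreal (norm (complex_of_real (GS s1 s2 s3 s4 z)) powr P) \<partial>lborel)
      = ennreal ((2*pi)\<^sup>2 * (s1 * s2 * s3 * s4) / P\<^sup>2)" .
  have nn: "(2*pi)\<^sup>2 * (s1 * s2 * s3 * s4) / P\<^sup>2 \<ge> 0" using s by simp
  have e: "enn2real (ennreal P) = P" using P0 by simp
  show ?thesis
    unfolding Lp_norm_def Let_def e I using P0 nn by simp
qed

lemma GS_pos': "GS s1 s2 s3 s4 z > 0"
  by (simp add: GS_def sep4_def eg_pos)

lemma Lp_GS_top:
  shows "Lp_norm lborel top (\<lambda>z. complex_of_real (GS s1 s2 s3 s4 z)) \<le> 1"
proof -
  have "AE x in lborel. ennreal (norm (complex_of_real (GS s1 s2 s3 s4 x))) \<le> 1"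
  proof (intro AE_I2)
    fix x
    have "norm (complex_of_real (GS s1 s2 s3 s4 x)) \<le> 1"
      using GS_pos'[of s1 s2 s3 s4 x] GS_le1[of s1 s2 s3 s4 x] by simp
    then show "ennreal (norm (complex_of_real (GS s1 s2 s3 s4 x))) \<le> 1"
      by (simp add: ennreal_le_1)
  qed
  then show ?thesis unfolding Lp_norm_def by (auto intro: Inf_lower)
qed

lemma powr_bounded_nonneg:
  fixes e B :: real
  assumes "\<forall>\<delta>. 0 < \<delta> \<and> \<delta> < 1 \<longrightarrow> \<delta> powr e \<le> B"
  shows "e \<ge> 0"
proof (rule ccontr)
  assume "\<not> e \<ge> 0" then have e: "e < 0" by linarith
  have "(1/2) powr e \<le> B" using assms[rule_format, of "1/2"] by simp
  moreover have "(1/2::real) powr e > 0" by simp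
  ultimately have B0: "B > 0" by linarith
  define \<delta> where "\<delta> = min (1/2) ((B + 1) powr (1 / e))"
  have d0: "0 < \<delta>" "\<delta> < 1" using B0 by (auto simp: \<delta>_def)
  have "\<delta> \<le> (B + 1) powr (1 / e)" by (simp add: \<delta>_def)
  then have "((B + 1) powr (1 / e)) powr e \<le> \<delta> powr e"
    using e d0 by (intro powr_mono2') auto
  also have "((B + 1) powr (1 / e)) powr e = B + 1"
    using e B0 by (simp add: powr_powr)
  finally have "B + 1 \<le> \<delta> powr e" .
  moreover have "\<delta> powr e \<le> B" using assms d0 by blast
  ultimately show False by linarith
qed



definition fam :: "real \<Rightarrow> real \<Rightarrow> real \<Rightarrow> real \<Rightarrow> real \<Rightarrow> R4 \<Rightarrow> complex" where
  "fam \<kappa> a1 a2 m \<delta> = (\<lambda>z. complex_of_real (GS (1 / (\<kappa> * \<delta> powr a1)) (1 / (\<kappa> * \<delta> powr a2))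
      (1 / (\<kappa> * \<delta> powr m)) (1 / (\<kappa> * \<delta> powr m)) z))"

lemma prod_s:
  fixes \<kappa> \<delta> a1 a2 m :: real
  assumes "\<kappa> > 0" "\<delta> > 0"
  shows "1 / (\<kappa> * \<delta> powr a1) * (1 / (\<kappa> * \<delta> powr a2)) * (1 / (\<kappa> * \<delta> powr m)) * (1 / (\<kappa> * \<delta> powr m))
     = 1 / \<kappa> ^ 4 * \<delta> powr (- (a1 + a2 + 2 * m))"
proof -
  have "\<delta> powr (a1 + a2 + 2 * m) = \<delta> powr a1 * \<delta> powr a2 * \<delta> powr m * \<delta> powr m"
    by (simp add: powr_add[symmetric] algebra_simps)
  then have "\<delta> powr (- (a1 + a2 + 2 * m)) = 1 / (\<delta> powr a1 * \<delta> powr a2 * \<delta> powr m * \<delta> powr m)"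
    by (simp only: powr_minus_divide)
  then show ?thesis using assms by (simp add: field_simps power4_eq_xxxx)
qed

lemma schwartz_fam: "\<kappa> > 0 \<Longrightarrow> \<delta> > 0 \<Longrightarrow> schwartz (fam \<kappa> a1 a2 m \<delta>)"
  unfolding fam_def by (rule schwartz_GS) auto

lemma fam_Lp:
  assumes k: "\<kappa> > 0" and d: "\<delta> > 0" and P: "P \<ge> 1"
  shows "Lp_norm lborel (ennreal P) (fam \<kappa> a1 a2 m \<delta>)
     = ennreal (((2*pi)\<^sup>2 / (\<kappa> ^ 4 * P\<^sup>2)) powr (1 / P) * \<delta> powr (- (a1 + a2 + 2 * m) / P))"
proof -
  have "Lp_norm lborel (ennreal P) (fam \<kappa> a1 a2 m \<delta>) =
    ennreal (((2*pi)\<^sup>2 * (1 / (\<kappa> * \<delta> powr a1) * (1 / (\<kappa> * \<delta> powr a2)) * (1 / (\<kappa> * \<delta> powr m)) * (1 / (\<kappa> * \<delta> powr m))) / P\<^sup>2) powr (1 / P))"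
    unfolding fam_def using k d P by (intro Lp_GS_fin) auto
  also have "(2*pi)\<^sup>2 * (1 / (\<kappa> * \<delta> powr a1) * (1 / (\<kappa> * \<delta> powr a2)) * (1 / (\<kappa> * \<delta> powr m)) * (1 / (\<kappa> * \<delta> powr m))) / P\<^sup>2
     = ((2*pi)\<^sup>2 / (\<kappa> ^ 4 * P\<^sup>2)) * \<delta> powr (- (a1 + a2 + 2 * m))"
    using prod_s[OF k d, of a1 a2 m] by simp
  also have "(((2*pi)\<^sup>2 / (\<kappa> ^ 4 * P\<^sup>2)) * \<delta> powr (- (a1 + a2 + 2 * m))) powr (1 / P)
     = ((2*pi)\<^sup>2 / (\<kappa> ^ 4 * P\<^sup>2)) powr (1 / P) * \<delta> powr (- (a1 + a2 + 2 * m) / P)"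
  proof -
    have A0: "(2*pi)\<^sup>2 / (\<kappa> ^ 4 * P\<^sup>2) \<ge> 0" using k P by simp
    have "(((2*pi)\<^sup>2 / (\<kappa> ^ 4 * P\<^sup>2)) * \<delta> powr (- (a1 + a2 + 2 * m))) powr (1 / P)
      = ((2*pi)\<^sup>2 / (\<kappa> ^ 4 * P\<^sup>2)) powr (1 / P) * (\<delta> powr (- (a1 + a2 + 2 * m))) powr (1 / P)"
      by (rule powr_mult)
    also have "(\<delta> powr (- (a1 + a2 + 2 * m))) powr (1 / P) = \<delta> powr (- (a1 + a2 + 2 * m) / P)"
      by (simp add: powr_powr)
    finally show ?thesis .
  qed
  finally show ?thesis .
qed

lemma fam_Lp_top: "Lp_norm lborel top (fam \<kappa> a1 a2 m \<delta>) \<le> 1"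
  unfolding fam_def by (rule Lp_GS_top)

lemma sq_dist:
  fixes x y :: "real \<times> real"
  assumes "\<bar>fst x - fst y\<bar> \<le> \<eta>" "\<bar>snd x - snd y\<bar> \<le> \<eta>"
  shows "dist x y \<le> 2 * \<eta>"
proof -
  have e0: "0 \<le> \<eta>" using assms(1) abs_ge_zero order_trans by blast
  have "dist x y = sqrt ((fst x - fst y)\<^sup>2 + (snd x - snd y)\<^sup>2)"
    by (cases x, cases y) (simp add: dist_Pair_Pair dist_real_def)
  also have "\<dots> \<le> sqrt ((2 * \<eta>)\<^sup>2)"
  proof (rule real_sqrt_le_mono)
    have "(fst x - fst y)\<^sup>2 \<le> \<eta>\<^sup>2" "(snd x - snd y)\<^sup>2 \<le> \<eta>\<^sup>2"
      using assms by (auto simp: abs_le_square_iff[symmetric])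
    then show "(fst x - fst y)\<^sup>2 + (snd x - snd y)\<^sup>2 \<le> (2 * \<eta>)\<^sup>2"
      using zero_le_square[of \<eta>] unfolding power2_eq_square by linarith
  qed
  also have "\<dots> = 2 * \<eta>" unfolding real_sqrt_abs using e0 by simp
  finally show ?thesis .
qed



lemma knapp_geom:
  fixes \<alpha>1 \<alpha>2 m a b c d :: real and \<phi> :: "real \<times> real \<Rightarrow> real \<times> real"
  assumes a1: "\<alpha>1 > 0" and a2: "\<alpha>2 > 0"
    and H1: "real_analytic_on2 (\<lambda>x. fst (\<phi> x)) (Vset \<alpha>1 \<alpha>2 a b)"
            "real_analytic_on2 (\<lambda>x. snd (\<phi> x)) (Vset \<alpha>1 \<alpha>2 a b)"
    and H2: "\<forall>x\<in>Vset \<alpha>1 \<alpha>2 a b. \<forall>t>0. \<phi> (dil \<alpha>1 \<alpha>2 t x) = t powr m *\<^sub>R \<phi> x"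
    and ac: "a < c" and cd: "c < d" and db: "d < b"
  shows "\<exists>u1 u2 v1 v2 \<kappa> c0. u1 < u2 \<and> v1 < v2 \<and> \<kappa> > 0 \<and> c0 > 0 \<and>
     (\<forall>\<delta>. 0 < \<delta> \<and> \<delta> < 1 \<longrightarrow>
        {\<delta> powr \<alpha>1 * u1 .. \<delta> powr \<alpha>1 * u2} \<times> {\<delta> powr \<alpha>2 * v1 .. \<delta> powr \<alpha>2 * v2} \<subseteq> V1set \<alpha>1 \<alpha>2 c d \<and>
        (\<forall>y \<in> {\<delta> powr \<alpha>1 * u1 .. \<delta> powr \<alpha>1 * u2} \<times> {\<delta> powr \<alpha>2 * v1 .. \<delta> powr \<alpha>2 * v2}.
           norm (fourier (fam \<kappa> \<alpha>1 \<alpha>2 m \<delta>) (y, \<phi> y)) \<ge> c0 * \<delta> powr (- (\<alpha>1 + \<alpha>2 + 2 * m))))"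
proof -
  let ?V1 = "V1set \<alpha>1 \<alpha>2 c d" and ?V = "Vset \<alpha>1 \<alpha>2 a b"
  have V1V: "?V1 \<subseteq> ?V" using V1_sub_V[OF ac db] .
  obtain x0 e where x0: "x0 \<in> ?V1" and e: "e > 0" and eV: "\<forall>x. dist x x0 < e \<longrightarrow> x \<in> ?V1"
    using V1_nhd[OF a1 cd, of \<alpha>2] by blast
  have x0V: "x0 \<in> ?V" using x0 V1V by blast
  obtain r1 where r1: "r1 > 0" and B1: "\<forall>\<eta>. 0 < \<eta> \<and> 2 * \<eta> < r1 \<and> (fst x0 + \<eta>, snd x0 + \<eta>) \<in> ?V \<longrightarrow>
     (\<exists>M. \<forall>x\<in>?V. \<bar>fst x - fst x0\<bar> \<le> \<eta> \<and> \<bar>snd x - snd x0\<bar> \<le> \<eta> \<longrightarrow> \<bar>fst (\<phi> x)\<bar> \<le> M)"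
    using analytic_bound[OF H1(1) x0V] by blast
  obtain r2 where r2: "r2 > 0" and B2: "\<forall>\<eta>. 0 < \<eta> \<and> 2 * \<eta> < r2 \<and> (fst x0 + \<eta>, snd x0 + \<eta>) \<in> ?V \<longrightarrow>
     (\<exists>M. \<forall>x\<in>?V. \<bar>fst x - fst x0\<bar> \<le> \<eta> \<and> \<bar>snd x - snd x0\<bar> \<le> \<eta> \<longrightarrow> \<bar>snd (\<phi> x)\<bar> \<le> M)"
    using analytic_bound[OF H1(2) x0V] by blast
  define \<eta> where "\<eta> = min e (min r1 r2) / 4"
  have \<eta>: "0 < \<eta>" "2 * \<eta> < r1" "2 * \<eta> < r2" "2 * \<eta> < e"
    using e r1 r2 by (auto simp: \<eta>_def)
  define u1 where "u1 = fst x0 - \<eta>"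
  define u2 where "u2 = fst x0 + \<eta>"
  define v1 where "v1 = snd x0 - \<eta>"
  define v2 where "v2 = snd x0 + \<eta>"
  have sqV1: "x \<in> ?V1" if "u1 \<le> fst x" "fst x \<le> u2" "v1 \<le> snd x" "snd x \<le> v2" for x
  proof -
    have "\<bar>fst x - fst x0\<bar> \<le> \<eta>" "\<bar>snd x - snd x0\<bar> \<le> \<eta>"
      using that by (auto simp: u1_def u2_def v1_def v2_def abs_le_iff)
    then have "dist x x0 \<le> 2 * \<eta>" by (rule sq_dist)
    then have "dist x x0 < e" using \<eta> by linarith
    then show ?thesis using eV by blast
  qed
  have cornerV: "(fst x0 + \<eta>, snd x0 + \<eta>) \<in> ?V"
    using sqV1[of "(fst x0 + \<eta>, snd x0 + \<eta>)"] V1V \<eta> by (auto simp: u1_def u2_def v1_def v2_def)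
  obtain M1 where M1: "\<forall>x\<in>?V. \<bar>fst x - fst x0\<bar> \<le> \<eta> \<and> \<bar>snd x - snd x0\<bar> \<le> \<eta> \<longrightarrow> \<bar>fst (\<phi> x)\<bar> \<le> M1"
    using B1 \<eta> cornerV by blast
  obtain M2 where M2: "\<forall>x\<in>?V. \<bar>fst x - fst x0\<bar> \<le> \<eta> \<and> \<bar>snd x - snd x0\<bar> \<le> \<eta> \<longrightarrow> \<bar>snd (\<phi> x)\<bar> \<le> M2"
    using B2 \<eta> cornerV by blast
  define Mb where "Mb = (\<bar>fst x0\<bar> + \<eta>)\<^sup>2 + (\<bar>snd x0\<bar> + \<eta>)\<^sup>2 + M1\<^sup>2 + M2\<^sup>2"
  have Mb0: "Mb \<ge> 0" by (simp add: Mb_def)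
  have Mbound: "(fst x)\<^sup>2 + (snd x)\<^sup>2 + (fst (\<phi> x))\<^sup>2 + (snd (\<phi> x))\<^sup>2 \<le> Mb"
    if "u1 \<le> fst x" "fst x \<le> u2" "v1 \<le> snd x" "snd x \<le> v2" for x
  proof -
    have xq: "\<bar>fst x - fst x0\<bar> \<le> \<eta>" "\<bar>snd x - snd x0\<bar> \<le> \<eta>"
      using that by (auto simp: u1_def u2_def v1_def v2_def abs_le_iff)
    have xV: "x \<in> ?V" using sqV1[OF that] V1V by blast
    have "\<bar>fst x\<bar> \<le> \<bar>\<bar>fst x0\<bar> + \<eta>\<bar>" "\<bar>snd x\<bar> \<le> \<bar>\<bar>snd x0\<bar> + \<eta>\<bar>"
      using xq \<eta> by (auto simp: abs_le_iff)
    then have 1: "(fst x)\<^sup>2 \<le> (\<bar>fst x0\<bar> + \<eta>)\<^sup>2" "(snd x)\<^sup>2 \<le> (\<bar>snd x0\<bar> + \<eta>)\<^sup>2"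
      by (simp_all only: abs_le_square_iff)
    have "\<bar>fst (\<phi> x)\<bar> \<le> \<bar>M1\<bar>" "\<bar>snd (\<phi> x)\<bar> \<le> \<bar>M2\<bar>"
      using M1 M2 xV xq by fastforce+
    then have 2: "(fst (\<phi> x))\<^sup>2 \<le> M1\<^sup>2" "(snd (\<phi> x))\<^sup>2 \<le> M2\<^sup>2"
      by (simp_all only: abs_le_square_iff)
    show ?thesis using 1 2 by (simp add: Mb_def)
  qed
  define \<kappa> where "\<kappa> = 4 * pi * sqrt (Mb + 1)"
  have k0: "\<kappa> > 0" using Mb0 by (simp add: \<kappa>_def)
  have k2: "\<kappa>\<^sup>2 = 16 * pi\<^sup>2 * (Mb + 1)" using Mb0 by (simp add: \<kappa>_def power_mult_distrib)
  define c0 where "c0 = (2 * pi)\<^sup>2 / (2 * \<kappa> ^ 4)"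
  have c0: "c0 > 0" using k0 by (simp add: c0_def)
  show ?thesis
  proof (rule exI[of _ u1], rule exI[of _ u2], rule exI[of _ v1], rule exI[of _ v2], rule exI[of _ \<kappa>], rule exI[of _ c0], intro conjI allI impI)
    show "u1 < u2" "v1 < v2" using \<eta> by (auto simp: u1_def u2_def v1_def v2_def)
    show "\<kappa> > 0" "c0 > 0" using k0 c0 by auto
    fix \<delta> :: real assume d: "0 < \<delta> \<and> \<delta> < 1"
    let ?R = "{\<delta> powr \<alpha>1 * u1 .. \<delta> powr \<alpha>1 * u2} \<times> {\<delta> powr \<alpha>2 * v1 .. \<delta> powr \<alpha>2 * v2}"
    have pa1: "\<delta> powr \<alpha>1 > 0" and pa2: "\<delta> powr \<alpha>2 > 0" using d by auto
    have pre: "u1 \<le> fst y / \<delta> powr \<alpha>1 \<and> fst y / \<delta> powr \<alpha>1 \<le> u2 \<and> v1 \<le> snd y / \<delta> powr \<alpha>2 \<and> snd y / \<delta> powr \<alpha>2 \<le> v2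
       \<and> dil \<alpha>1 \<alpha>2 \<delta> (fst y / \<delta> powr \<alpha>1, snd y / \<delta> powr \<alpha>2) = y" if "y \<in> ?R" for y
      using that pa1 pa2 by (cases y) (auto simp: dil_def pos_le_divide_eq pos_divide_le_eq mult.commute)
    show "?R \<subseteq> ?V1"
    proof
      fix y assume y: "y \<in> ?R"
      define x where "x = (fst y / \<delta> powr \<alpha>1, snd y / \<delta> powr \<alpha>2)"
      have "x \<in> ?V1" using pre[OF y] sqV1[of x] by (simp add: x_def)
      then have "dil \<alpha>1 \<alpha>2 \<delta> x \<in> ?V1" using d by (intro V1_dil) auto
      then show "y \<in> ?V1" using pre[OF y] by (simp add: x_def)
    qed
    show "\<forall>y\<in>?R. norm (fourier (fam \<kappa> \<alpha>1 \<alpha>2 m \<delta>) (y, \<phi> y)) \<ge> c0 * \<delta> powr (- (\<alpha>1 + \<alpha>2 + 2 * m))"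
    proof
      fix y assume y: "y \<in> ?R"
      define x where "x = (fst y / \<delta> powr \<alpha>1, snd y / \<delta> powr \<alpha>2)"
      have xs: "u1 \<le> fst x" "fst x \<le> u2" "v1 \<le> snd x" "snd x \<le> v2" using pre[OF y] by (auto simp: x_def)
      have yx: "y = dil \<alpha>1 \<alpha>2 \<delta> x" using pre[OF y] by (simp add: x_def)
      have xV: "x \<in> ?V" using sqV1[OF xs] V1V by blast
      have phiy: "\<phi> y = \<delta> powr m *\<^sub>R \<phi> x" using H2 xV d yx by auto
      define s1 where "s1 = 1 / (\<kappa> * \<delta> powr \<alpha>1)"
      define s2 where "s2 = 1 / (\<kappa> * \<delta> powr \<alpha>2)"
      define s3 where "s3 = 1 / (\<kappa> * \<delta> powr m)"
      have s: "s1 > 0" "s2 > 0" "s3 > 0" using k0 d by (auto simp: s1_def s2_def s3_def)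
      have e1: "fst y * s1 = fst x / \<kappa>" using yx k0 pa1 by (simp add: s1_def dil_def)
      have e2: "snd y * s2 = snd x / \<kappa>" using yx k0 pa2 by (simp add: s2_def dil_def)
      have e3: "fst (\<phi> y) * s3 = fst (\<phi> x) / \<kappa>" using phiy k0 d by (simp add: s3_def)
      have e4: "snd (\<phi> y) * s3 = snd (\<phi> x) / \<kappa>" using phiy k0 d by (simp add: s3_def)
      have sumq: "(fst y * s1)\<^sup>2 + (snd y * s2)\<^sup>2 + (fst (\<phi> y) * s3)\<^sup>2 + (snd (\<phi> y) * s3)\<^sup>2
          = ((fst x)\<^sup>2 + (snd x)\<^sup>2 + (fst (\<phi> x))\<^sup>2 + (snd (\<phi> x))\<^sup>2) / \<kappa>\<^sup>2"
        unfolding e1 e2 e3 e4 by (simp add: power_divide add_divide_distrib)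
      have "8 * pi\<^sup>2 * (((fst x)\<^sup>2 + (snd x)\<^sup>2 + (fst (\<phi> x))\<^sup>2 + (snd (\<phi> x))\<^sup>2) / \<kappa>\<^sup>2)
           \<le> 8 * pi\<^sup>2 * (Mb / \<kappa>\<^sup>2)"
        using Mbound[OF xs] k0 by (intro mult_left_mono divide_right_mono) auto
      also have "\<dots> \<le> 1 / 2"
      proof -
        have kk: "\<kappa>\<^sup>2 > 0" using k0 by simp
        have "Mb / \<kappa>\<^sup>2 \<le> (Mb + 1) / \<kappa>\<^sup>2" using kk by (intro divide_right_mono) auto
        also have "(Mb + 1) / \<kappa>\<^sup>2 = 1 / (16 * pi\<^sup>2)"
        proof -
          have "Mb + 1 \<noteq> 0" using Mb0 by linarith
          then show ?thesis unfolding k2 by simp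
        qed
        finally have "8 * pi\<^sup>2 * (Mb / \<kappa>\<^sup>2) \<le> 8 * pi\<^sup>2 * (1 / (16 * pi\<^sup>2))"
          by (intro mult_left_mono) auto
        also have "\<dots> = 1 / 2" by simp
        finally show ?thesis .
      qed
      finally have small: "8 * pi\<^sup>2 * ((fst y * s1)\<^sup>2 + (snd y * s2)\<^sup>2 + (fst (\<phi> y) * s3)\<^sup>2 + (snd (\<phi> y) * s3)\<^sup>2) \<le> 1 / 2"
        unfolding sumq .
      have F: "Re (fourier (fam \<kappa> \<alpha>1 \<alpha>2 m \<delta>) (y, \<phi> y)) \<ge>
         (2*pi)\<^sup>2 * (s1 * s2 * s3 * s3) * (1 - 8 * pi\<^sup>2 * ((fst y * s1)\<^sup>2 + (snd y * s2)\<^sup>2 + (fst (\<phi> y) * s3)\<^sup>2 + (snd (\<phi> y) * s3)\<^sup>2))"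
        using fourier_GS[OF s s(3), of "(y, \<phi> y)"] unfolding fam_def s1_def s2_def s3_def by simp
      have P: "s1 * s2 * s3 * s3 = 1 / \<kappa> ^ 4 * \<delta> powr (- (\<alpha>1 + \<alpha>2 + 2 * m))"
        using prod_s[OF k0, of \<delta> \<alpha>1 \<alpha>2 m] d by (simp add: s1_def s2_def s3_def)
      have "c0 * \<delta> powr (- (\<alpha>1 + \<alpha>2 + 2 * m)) = (2*pi)\<^sup>2 * (s1 * s2 * s3 * s3) * (1 / 2)"
        unfolding P c0_def by simp
      also have "\<dots> \<le> (2*pi)\<^sup>2 * (s1 * s2 * s3 * s3) * (1 - 8 * pi\<^sup>2 * ((fst y * s1)\<^sup>2 + (snd y * s2)\<^sup>2 + (fst (\<phi> y) * s3)\<^sup>2 + (snd (\<phi> y) * s3)\<^sup>2))"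
        using small s by (intro mult_left_mono) auto
      also have "\<dots> \<le> Re (fourier (fam \<kappa> \<alpha>1 \<alpha>2 m \<delta>) (y, \<phi> y))" by (rule F)
      also have "\<dots> \<le> norm (fourier (fam \<kappa> \<alpha>1 \<alpha>2 m \<delta>) (y, \<phi> y))" by (rule complex_Re_le_cmod)
      finally show "norm (fourier (fam \<kappa> \<alpha>1 \<alpha>2 m \<delta>) (y, \<phi> y)) \<ge> c0 * \<delta> powr (- (\<alpha>1 + \<alpha>2 + 2 * m))" .
    qed
  qed
qed



lemma emeasure_rect:
  assumes "a1 \<le> b1" "a2 \<le> b2"
  shows "emeasure lborel ({a1..b1} \<times> {a2..b2} :: (real \<times> real) set) = ennreal ((b1 - a1) * (b2 - a2))"
proof -
  have "emeasure (lborel :: (real \<times> real) measure) ({a1..b1} \<times> {a2..b2})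
      = emeasure (lborel \<Otimes>\<^sub>M lborel) ({a1..b1} \<times> {a2..b2})" by (simp add: lborel_prod)
  also have "\<dots> = emeasure lborel {a1..b1} * emeasure lborel {a2..b2}"
    by (rule lborel.emeasure_pair_measure_Times) auto
  also have "\<dots> = ennreal ((b1 - a1) * (b2 - a2))" using assms by (simp add: ennreal_mult)
  finally show ?thesis .
qed

lemma rect_sets: "({a1..b1} \<times> {a2..b2} :: (real \<times> real) set) \<in> sets lborel"
  by (simp add: borel_closed closed_Times)

lemma lhs_fin:
  fixes F :: "real \<times> real \<Rightarrow> complex"
  assumes V: "V \<in> sets lborel" and R: "{a1..b1} \<times> {a2..b2} \<subseteq> V" and ab: "a1 < b1" "a2 < b2"
    and Q: "Q \<ge> 1" and c: "c > 0" and Fc: "\<forall>y \<in> {a1..b1} \<times> {a2..b2}. norm (F y) \<ge> c"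
  shows "Lp_norm (restrict_space lborel V) (ennreal Q) F \<ge> ennreal (c * ((b1 - a1) * (b2 - a2)) powr (1 / Q))"
proof -
  let ?R = "{a1..b1} \<times> {a2..b2} :: (real \<times> real) set"
  define ar where "ar = (b1 - a1) * (b2 - a2)"
  have ar0: "ar > 0" using ab by (simp add: ar_def)
  have Q0: "Q > 0" using Q by simp
  define I where "I = (\<integral>\<^sup>+ x. ennreal (norm (F x) powr Q) \<partial>restrict_space lborel V)"
  have "I = (\<integral>\<^sup>+ x. ennreal (norm (F x) powr Q) * indicator V x \<partial>lborel)"
    unfolding I_def using V by (subst nn_integral_restrict_space) auto
  also have "\<dots> \<ge> (\<integral>\<^sup>+ x. ennreal (c powr Q) * indicator ?R x \<partial>lborel)"
  proof (rule nn_integral_mono)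
    fix x
    show "ennreal (c powr Q) * indicator ?R x \<le> ennreal (norm (F x) powr Q) * indicator V x"
    proof (cases "x \<in> ?R")
      case True
      then have "x \<in> V" using R by blast
      moreover have "c powr Q \<le> norm (F x) powr Q" using Fc True c Q0 by (intro powr_mono2) auto
      ultimately show ?thesis using True by (simp add: ennreal_leI)
    qed simp
  qed
  also have "(\<integral>\<^sup>+ x. ennreal (c powr Q) * indicator ?R x \<partial>lborel) = ennreal (c powr Q) * emeasure lborel ?R"
    using rect_sets by (simp add: nn_integral_cmult_indicator)
  also have "\<dots> = ennreal (c powr Q * ar)"
    using ab c by (simp add: emeasure_rect ar_def ennreal_mult)
  finally have Ige: "ennreal (c powr Q * ar) \<le> I" .
  have e: "enn2real (ennreal Q) = Q" using Q0 by simp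
  show ?thesis
  proof (cases "I = top")
    case True
    then show ?thesis unfolding Lp_norm_def Let_def e I_def[symmetric] by simp
  next
    case False
    have "c powr Q * ar \<le> enn2real I"
      using Ige False c ar0 by (metis ennreal_enn2real_if ennreal_le_iff enn2real_nonneg)
    then have "(c powr Q * ar) powr (1 / Q) \<le> enn2real I powr (1 / Q)"
      using c ar0 Q0 by (intro powr_mono2) auto
    moreover have "(c powr Q * ar) powr (1 / Q) = c * ar powr (1 / Q)"
      using c ar0 Q0 by (simp add: powr_mult powr_powr)
    ultimately have "c * ar powr (1 / Q) \<le> enn2real I powr (1 / Q)" by simp
    then show ?thesis unfolding Lp_norm_def Let_def e I_def[symmetric] using False Q0
      by (simp add: ennreal_leI ar_def)
  qed
qed

lemma lhs_top:
  fixes F :: "real \<times> real \<Rightarrow> complex"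
  assumes V: "V \<in> sets lborel" and R: "{a1..b1} \<times> {a2..b2} \<subseteq> V" and ab: "a1 < b1" "a2 < b2"
    and c: "c > 0" and Fc: "\<forall>y \<in> {a1..b1} \<times> {a2..b2}. norm (F y) \<ge> c"
  shows "Lp_norm (restrict_space lborel V) top F \<ge> ennreal c"
proof -
  let ?R = "{a1..b1} \<times> {a2..b2} :: (real \<times> real) set"
  have "ennreal c \<le> C" if C: "AE x in restrict_space lborel V. ennreal (norm (F x)) \<le> C" for C
  proof (rule ccontr)
    assume "\<not> ennreal c \<le> C"
    then have Cc: "C < ennreal c" by simp
    have "AE x in lborel. x \<in> V \<longrightarrow> ennreal (norm (F x)) \<le> C"
      using C V by (subst (asm) AE_restrict_space_iff) auto
    then have "AE x in lborel. x \<notin> ?R"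
    proof (rule AE_mp, intro AE_I2 impI)
      fix x assume h: "x \<in> V \<longrightarrow> ennreal (norm (F x)) \<le> C"
      show "x \<notin> ?R"
      proof
        assume xR: "x \<in> ?R"
        then have a: "ennreal (norm (F x)) \<le> C" using h R by blast
        have "c \<le> norm (F x)" using Fc xR by blast
        then have b: "ennreal c \<le> ennreal (norm (F x))" by (rule ennreal_leI)
        from b a have "ennreal c \<le> C" by (rule order_trans)
        with Cc show False by simp
      qed
    qed
    then have "emeasure lborel ?R = 0"
      using AE_iff_measurable[OF rect_sets, of "\<lambda>x. x \<notin> ?R"] by auto
    moreover have "emeasure lborel ?R = ennreal ((b1 - a1) * (b2 - a2))"
      using ab by (intro emeasure_rect) auto
    ultimately show False using ab by simp
  qed
  then show ?thesis unfolding Lp_norm_def by (auto intro: Inf_greatest)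
qed



theorem lemma4p1:
  fixes \<alpha>1 \<alpha>2 m a b c d \<sigma> :: real
    and \<phi> :: "real \<times> real \<Rightarrow> real \<times> real"
    and p q :: ennreal
  assumes alpha_pos: "\<alpha>1 > 0" "\<alpha>2 > 0" and alpha_ne: "\<alpha>1 \<noteq> \<alpha>2"
    and H1: "real_analytic_on2 (\<lambda>x. fst (\<phi> x)) (Vset \<alpha>1 \<alpha>2 a b)"
            "real_analytic_on2 (\<lambda>x. snd (\<phi> x)) (Vset \<alpha>1 \<alpha>2 a b)"
    and H2: "m \<ge> 3 * (\<alpha>1 + \<alpha>2)"
            "\<forall>x\<in>Vset \<alpha>1 \<alpha>2 a b. \<forall>t>0. \<phi> (dil \<alpha>1 \<alpha>2 t x) = t powr m *\<^sub>R \<phi> x"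
    and H3: "a < c" "c < d" "d < b" "c \<le> \<sigma>" "\<sigma> \<le> d"
            "{x \<in> closure (Vset \<alpha>1 \<alpha>2 c d) - {(0, 0)}. \<not> elliptic \<phi> x}
               = {dil \<alpha>1 \<alpha>2 t (1, \<sigma>) | t. t > 0}"
    and H4: "\<exists>n1 n2 :: nat. \<exists>D \<delta> :: real. n1 > 0 \<and> n2 > 0 \<and> D > 0 \<and> \<delta> > 0 \<and>
               (c < \<sigma> \<longrightarrow> (\<forall>s t. \<sigma> - \<delta> < s \<and> s < \<sigma> \<and> t > 0 \<longrightarrow>
                   minQ \<phi> (dil \<alpha>1 \<alpha>2 t (1, s))
                     \<ge> D * t powr (2 * (m - \<alpha>1 - \<alpha>2)) * \<bar>s - \<sigma>\<bar> ^ n1)) \<and>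
               (\<sigma> < d \<longrightarrow> (\<forall>s t. \<sigma> < s \<and> s < \<sigma> + \<delta> \<and> t > 0 \<longrightarrow>
                   minQ \<phi> (dil \<alpha>1 \<alpha>2 t (1, s))
                     \<ge> D * t powr (2 * (m - \<alpha>1 - \<alpha>2)) * \<bar>s - \<sigma>\<bar> ^ n2)) \<and>
               real (max n1 n2) < 2 * m / (\<alpha>1 + \<alpha>2) - 3"
    and pq: "1 \<le> p" "1 \<le> q"
    and restr: "\<exists>C>0. \<forall>f. schwartz f \<longrightarrow>
        Lp_norm (restrict_space lborel (V1set \<alpha>1 \<alpha>2 c d)) q (\<lambda>x. fourier f (x, \<phi> x))
          \<le> ennreal C * Lp_norm lborel p f"
  shows "1 / q \<ge> ennreal ((\<alpha>1 + \<alpha>2 + 2 * m) / (\<alpha>1 + \<alpha>2)) * (1 - 1 / p)"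
proof -
  define S where "S = \<alpha>1 + \<alpha>2 + 2 * m"
  define A where "A = \<alpha>1 + \<alpha>2"
  have A0: "A > 0" using alpha_pos by (simp add: A_def)
  obtain u1 u2 v1 v2 \<kappa> c0 where uv: "u1 < u2" "v1 < v2" and k0: "\<kappa> > 0" and c0: "c0 > 0"
    and geo: "\<forall>\<delta>. 0 < \<delta> \<and> \<delta> < 1 \<longrightarrow>
        {\<delta> powr \<alpha>1 * u1 .. \<delta> powr \<alpha>1 * u2} \<times> {\<delta> powr \<alpha>2 * v1 .. \<delta> powr \<alpha>2 * v2} \<subseteq> V1set \<alpha>1 \<alpha>2 c d \<and>
        (\<forall>y \<in> {\<delta> powr \<alpha>1 * u1 .. \<delta> powr \<alpha>1 * u2} \<times> {\<delta> powr \<alpha>2 * v1 .. \<delta> powr \<alpha>2 * v2}.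
           norm (fourier (fam \<kappa> \<alpha>1 \<alpha>2 m \<delta>) (y, \<phi> y)) \<ge> c0 * \<delta> powr (- (\<alpha>1 + \<alpha>2 + 2 * m)))"
    using knapp_geom[OF alpha_pos H1 H2(2) H3(1-3)] by blast
  obtain C where C0: "C > 0" and Cb: "\<forall>f. schwartz f \<longrightarrow>
        Lp_norm (restrict_space lborel (V1set \<alpha>1 \<alpha>2 c d)) q (\<lambda>x. fourier f (x, \<phi> x))
          \<le> ennreal C * Lp_norm lborel p f" using restr by blast
  have Vm: "V1set \<alpha>1 \<alpha>2 c d \<in> sets lborel" by (rule V1_meas[OF alpha_pos(1)])
  define ar where "ar = (u2 - u1) * (v2 - v1)"
  have ar0: "ar > 0" using uv by (simp add: ar_def)
  have arD: "(\<delta> powr \<alpha>1 * u2 - \<delta> powr \<alpha>1 * u1) * (\<delta> powr \<alpha>2 * v2 - \<delta> powr \<alpha>2 * v1) = \<delta> powr A * ar"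
    if "\<delta> > 0" for \<delta>
    using that by (simp add: A_def ar_def powr_add algebra_simps)
  have RHS: "\<exists>pinv Kp. 0 \<le> pinv \<and> pinv \<le> 1 \<and> Kp > 0 \<and> 1 / p = ennreal pinv \<and>
     (\<forall>\<delta>. 0 < \<delta> \<and> \<delta> < 1 \<longrightarrow> Lp_norm lborel p (fam \<kappa> \<alpha>1 \<alpha>2 m \<delta>) \<le> ennreal (Kp * \<delta> powr (- S * pinv)))"
  proof (cases "p = top")
    case True
    then show ?thesis
      by (intro exI[of _ 0] exI[of _ 1]) (auto simp: fam_Lp_top)
  next
    case False
    define P where "P = enn2real p"
    have pP: "p = ennreal P" using False by (simp add: P_def ennreal_enn2real_if)
    have P1: "P \<ge> 1" using pq(1) unfolding pP by simp
    have P0: "P > 0" using P1 by simp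
    define Kp where "Kp = ((2*pi)\<^sup>2 / (\<kappa> ^ 4 * P\<^sup>2)) powr (1 / P)"
    have Kp: "Kp > 0" using k0 P0 by (simp add: Kp_def)
    have "1 / p = ennreal (1 / P)" unfolding pP using P0 divide_ennreal[of 1 P] by simp
    moreover have "Lp_norm lborel p (fam \<kappa> \<alpha>1 \<alpha>2 m \<delta>) = ennreal (Kp * \<delta> powr (- S * (1 / P)))"
      if "0 < \<delta> \<and> \<delta> < 1" for \<delta>
      unfolding pP using fam_Lp[OF k0 _ P1, of \<delta> \<alpha>1 \<alpha>2 m] that by (simp add: Kp_def S_def)
    ultimately show ?thesis using P1 P0 Kp
      by (intro exI[of _ "1 / P"] exI[of _ Kp]) auto
  qed
  then obtain pinv Kp where pinv: "0 \<le> pinv" "pinv \<le> 1" and Kp: "Kp > 0" and pinv_eq: "1 / p = ennreal pinv"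
    and Rb: "\<forall>\<delta>. 0 < \<delta> \<and> \<delta> < 1 \<longrightarrow> Lp_norm lborel p (fam \<kappa> \<alpha>1 \<alpha>2 m \<delta>) \<le> ennreal (Kp * \<delta> powr (- S * pinv))"
    by blast
  have LHS: "\<exists>qinv Kq. 0 \<le> qinv \<and> Kq > 0 \<and> 1 / q = ennreal qinv \<and>
     (\<forall>\<delta>. 0 < \<delta> \<and> \<delta> < 1 \<longrightarrow> ennreal (Kq * \<delta> powr (- S + A * qinv)) \<le>
        Lp_norm (restrict_space lborel (V1set \<alpha>1 \<alpha>2 c d)) q (\<lambda>x. fourier (fam \<kappa> \<alpha>1 \<alpha>2 m \<delta>) (x, \<phi> x)))"
  proof (cases "q = top")
    case True
    have "ennreal (c0 * \<delta> powr (- S + A * 0)) \<le>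
        Lp_norm (restrict_space lborel (V1set \<alpha>1 \<alpha>2 c d)) q (\<lambda>x. fourier (fam \<kappa> \<alpha>1 \<alpha>2 m \<delta>) (x, \<phi> x))"
      if d: "0 < \<delta> \<and> \<delta> < 1" for \<delta>
    proof -
      have pa: "\<delta> powr \<alpha>1 > 0" "\<delta> powr \<alpha>2 > 0" using d by auto
      have lt: "\<delta> powr \<alpha>1 * u1 < \<delta> powr \<alpha>1 * u2" "\<delta> powr \<alpha>2 * v1 < \<delta> powr \<alpha>2 * v2"
        using pa uv by auto
      have "ennreal (c0 * \<delta> powr (- (\<alpha>1 + \<alpha>2 + 2 * m))) \<le>
        Lp_norm (restrict_space lborel (V1set \<alpha>1 \<alpha>2 c d)) top (\<lambda>x. fourier (fam \<kappa> \<alpha>1 \<alpha>2 m \<delta>) (x, \<phi> x))"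
        using geo[rule_format, OF d] lt c0 d
        by (intro lhs_top[OF Vm _ lt(1) lt(2)]) auto
      then show ?thesis unfolding True by (simp add: S_def)
    qed
    then show ?thesis using True c0
      by (intro exI[of _ 0] exI[of _ c0]) auto
  next
    case False
    define Q where "Q = enn2real q"
    have qQ: "q = ennreal Q" using False by (simp add: Q_def ennreal_enn2real_if)
    have Q1: "Q \<ge> 1" using pq(2) unfolding qQ by simp
    have Q0: "Q > 0" using Q1 by simp
    define Kq where "Kq = c0 * ar powr (1 / Q)"
    have Kq: "Kq > 0" using c0 ar0 by (simp add: Kq_def)
    have "1 / q = ennreal (1 / Q)" unfolding qQ using Q0 divide_ennreal[of 1 Q] by simp
    moreover have "ennreal (Kq * \<delta> powr (- S + A * (1 / Q))) \<le>
        Lp_norm (restrict_space lborel (V1set \<alpha>1 \<alpha>2 c d)) q (\<lambda>x. fourier (fam \<kappa> \<alpha>1 \<alpha>2 m \<delta>) (x, \<phi> x))"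
      if d: "0 < \<delta> \<and> \<delta> < 1" for \<delta>
    proof -
      have pa: "\<delta> powr \<alpha>1 > 0" "\<delta> powr \<alpha>2 > 0" using d by auto
      have lt: "\<delta> powr \<alpha>1 * u1 < \<delta> powr \<alpha>1 * u2" "\<delta> powr \<alpha>2 * v1 < \<delta> powr \<alpha>2 * v2"
        using pa uv by auto
      have "ennreal (c0 * \<delta> powr (- (\<alpha>1 + \<alpha>2 + 2 * m)) *
          ((\<delta> powr \<alpha>1 * u2 - \<delta> powr \<alpha>1 * u1) * (\<delta> powr \<alpha>2 * v2 - \<delta> powr \<alpha>2 * v1)) powr (1 / Q))
        \<le> Lp_norm (restrict_space lborel (V1set \<alpha>1 \<alpha>2 c d)) (ennreal Q) (\<lambda>x. fourier (fam \<kappa> \<alpha>1 \<alpha>2 m \<delta>) (x, \<phi> x))"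
        using geo[rule_format, OF d] lt Q1 c0 d
        by (intro lhs_fin[OF Vm _ lt(1) lt(2)]) auto
      moreover have "c0 * \<delta> powr (- (\<alpha>1 + \<alpha>2 + 2 * m)) *
          ((\<delta> powr \<alpha>1 * u2 - \<delta> powr \<alpha>1 * u1) * (\<delta> powr \<alpha>2 * v2 - \<delta> powr \<alpha>2 * v1)) powr (1 / Q)
          = Kq * \<delta> powr (- S + A * (1 / Q))"
      proof -
        have "(\<delta> powr A * ar) powr (1 / Q) = \<delta> powr (A * (1 / Q)) * ar powr (1 / Q)"
          by (simp add: powr_mult powr_powr)
        moreover have "\<delta> powr (- (\<alpha>1 + \<alpha>2 + 2 * m)) * \<delta> powr (A * (1 / Q)) = \<delta> powr (- S + A * (1 / Q))"
          by (simp add: powr_add[symmetric] S_def)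
        ultimately show ?thesis
          unfolding arD[of \<delta>, OF conjunct1[OF d]] Kq_def
          by (simp only: mult.assoc mult.left_commute mult.commute)
      qed
      ultimately show ?thesis unfolding qQ by simp
    qed
    ultimately show ?thesis using Q0 Kq
      by (intro exI[of _ "1 / Q"] exI[of _ Kq]) auto
  qed
  then obtain qinv Kq where qinv: "0 \<le> qinv" and Kq: "Kq > 0" and qinv_eq: "1 / q = ennreal qinv"
    and Lb: "\<forall>\<delta>. 0 < \<delta> \<and> \<delta> < 1 \<longrightarrow> ennreal (Kq * \<delta> powr (- S + A * qinv)) \<le>
        Lp_norm (restrict_space lborel (V1set \<alpha>1 \<alpha>2 c d)) q (\<lambda>x. fourier (fam \<kappa> \<alpha>1 \<alpha>2 m \<delta>) (x, \<phi> x))"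
    by blast
  have bnd: "\<delta> powr ((- S + A * qinv) - (- S * pinv)) \<le> C * Kp / Kq" if d: "0 < \<delta> \<and> \<delta> < 1" for \<delta>
  proof -
    have "ennreal (Kq * \<delta> powr (- S + A * qinv)) \<le> ennreal C * Lp_norm lborel p (fam \<kappa> \<alpha>1 \<alpha>2 m \<delta>)"
      using Lb[rule_format, OF d] Cb[rule_format, OF schwartz_fam[OF k0 conjunct1[OF d]]] by (rule order_trans)
    also have "\<dots> \<le> ennreal C * ennreal (Kp * \<delta> powr (- S * pinv))"
      using Rb[rule_format, OF d] by (rule mult_left_mono) simp
    also have "\<dots> = ennreal (C * (Kp * \<delta> powr (- S * pinv)))" using C0 Kp by (intro ennreal_mult[symmetric]) auto
    finally have "Kq * \<delta> powr (- S + A * qinv) \<le> C * (Kp * \<delta> powr (- S * pinv))"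
      using C0 Kp by (subst (asm) ennreal_le_iff) auto
    then have h: "\<delta> powr (- S + A * qinv) / \<delta> powr (- S * pinv) \<le> C * Kp / Kq"
      using Kq d by (simp add: field_simps)
    have eq: "\<delta> powr ((- S + A * qinv) - (- S * pinv)) = \<delta> powr (- S + A * qinv) / \<delta> powr (- S * pinv)"
      by (rule powr_diff)
    show ?thesis unfolding eq by (rule h)
  qed
  have "(- S + A * qinv) - (- S * pinv) \<ge> 0"
    using bnd by (intro powr_bounded_nonneg[of _ "C * Kp / Kq"]) auto
  then have key: "S / A * (1 - pinv) \<le> qinv"
    using A0 by (simp add: field_simps)
  have "ennreal (S / A) * (1 - 1 / p) = ennreal (S / A) * ennreal (1 - pinv)"
    unfolding pinv_eq using pinv by (simp add: ennreal_minus[symmetric])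
  also have "\<dots> = ennreal (S / A * (1 - pinv))"
  proof -
    have S0: "S > 0" using alpha_pos H2(1) by (simp add: S_def)
    show ?thesis using pinv A0 S0 by (intro ennreal_mult[symmetric]) auto
  qed
  also have "\<dots> \<le> ennreal qinv" using key by (rule ennreal_leI)
  finally show ?thesis unfolding qinv_eq S_def A_def .
qed

end
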